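(* Let $1\le p<\infty$, $\alpha>0$, $m>0$. The Hardy operator $Hf(z)=\frac1z\int_0^zf(w)\,dw$ is bounded on $\mathcal{F}^p_{(\alpha,m)}$ with $\|H\|=1$, and $H$ is power bounded and uniformly mean ergodic on $\mathcal{F}^p_{(\alpha,m)}$.
   Context: For $\alpha>0$, $m>0$ and $1\le p<\infty$, $\mathcal{F}^p_{(\alpha,m)}$ denotes the Banach space of entire functions $f$ on $\mathbb{C}$ with $\|f\|_{(p,\alpha,m)}^p=\int_{\mathbb{C}}|f(z)|^pe^{-p\alpha|z|^m}\,dA(z)<\infty$, where $dA$ is Lebesgue area measure. In the definition of $H$, $Hf(0)$ is understood as $f(0)$ (the removable singularity). A bounded operator $T$ is power bounded if $\sup_{n\ge0}\|T^n\|<\infty$, and uniformly mean ergodic if $\frac1n\sum_{k=1}^nT^k$ converges in operator norm as $n\to\infty$. *)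

theory Defs
  imports "HOL-Complex_Analysis.Complex_Analysis"
begin

definition fock_integrand :: "real \<Rightarrow> real \<Rightarrow> real \<Rightarrow> (complex \<Rightarrow> complex) \<Rightarrow> complex \<Rightarrow> real" where
  "fock_integrand p \<alpha> m f z = norm (f z) powr p * exp (- p * \<alpha> * norm z powr m)"

definition fock_space :: "real \<Rightarrow> real \<Rightarrow> real \<Rightarrow> (complex \<Rightarrow> complex) set" where
  "fock_space p \<alpha> m = {f. f holomorphic_on UNIV \<and> integrable lborel (fock_integrand p \<alpha> m f)}"

definition fock_norm :: "real \<Rightarrow> real \<Rightarrow> real \<Rightarrow> (complex \<Rightarrow> complex) \<Rightarrow> real" where
  "fock_norm p \<alpha> m f = (integral\<^sup>L lborel (fock_integrand p \<alpha> m f)) powr (1 / p)"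

definition fock_bounded_op :: "real \<Rightarrow> real \<Rightarrow> real \<Rightarrow> ((complex \<Rightarrow> complex) \<Rightarrow> (complex \<Rightarrow> complex)) \<Rightarrow> bool" where
  "fock_bounded_op p \<alpha> m T \<longleftrightarrow>
     (\<forall>f \<in> fock_space p \<alpha> m. T f \<in> fock_space p \<alpha> m) \<and>
     (\<forall>f \<in> fock_space p \<alpha> m. \<forall>g \<in> fock_space p \<alpha> m. \<forall>a b :: complex.
        T (\<lambda>z. a * f z + b * g z) = (\<lambda>z. a * T f z + b * T g z)) \<and>
     (\<exists>C. \<forall>f \<in> fock_space p \<alpha> m. fock_norm p \<alpha> m (T f) \<le> C * fock_norm p \<alpha> m f)"

definition fock_opnorm :: "real \<Rightarrow> real \<Rightarrow> real \<Rightarrow> ((complex \<Rightarrow> complex) \<Rightarrow> (complex \<Rightarrow> complex)) \<Rightarrow> real" where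
  "fock_opnorm p \<alpha> m T =
     Inf {C. 0 \<le> C \<and> (\<forall>f \<in> fock_space p \<alpha> m. fock_norm p \<alpha> m (T f) \<le> C * fock_norm p \<alpha> m f)}"

definition hardy_op :: "(complex \<Rightarrow> complex) \<Rightarrow> complex \<Rightarrow> complex" where
  "hardy_op f z = (if z = 0 then f 0 else contour_integral (linepath 0 z) f / z)"

definition power_bounded :: "real \<Rightarrow> real \<Rightarrow> real \<Rightarrow> ((complex \<Rightarrow> complex) \<Rightarrow> (complex \<Rightarrow> complex)) \<Rightarrow> bool" where
  "power_bounded p \<alpha> m T \<longleftrightarrow> fock_bounded_op p \<alpha> m T \<and> bdd_above (range (\<lambda>n. fock_opnorm p \<alpha> m (T ^^ n)))"

definition cesaro_mean :: "((complex \<Rightarrow> complex) \<Rightarrow> (complex \<Rightarrow> complex)) \<Rightarrow> nat \<Rightarrow> (complex \<Rightarrow> complex) \<Rightarrow> complex \<Rightarrow> complex" where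
  "cesaro_mean T n f = (\<lambda>z. (\<Sum>k=1..n. (T ^^ k) f z) / of_nat n)"

definition uniformly_mean_ergodic :: "real \<Rightarrow> real \<Rightarrow> real \<Rightarrow> ((complex \<Rightarrow> complex) \<Rightarrow> (complex \<Rightarrow> complex)) \<Rightarrow> bool" where
  "uniformly_mean_ergodic p \<alpha> m T \<longleftrightarrow> fock_bounded_op p \<alpha> m T \<and>
     (\<exists>L. fock_bounded_op p \<alpha> m L \<and>
        (\<lambda>n. fock_opnorm p \<alpha> m (\<lambda>f z. cesaro_mean T n f z - L f z)) \<longlonglongrightarrow> 0)"

end

theory Submission
  imports Defs
begin


lemma complex_pair_measurable[measurable]:
  "(\<lambda>(x,y). Complex x y) \<in> borel_measurable (lborel \<Otimes>\<^sub>M lborel)"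
proof -
  have "(\<lambda>(x,y). Complex x y) = (\<lambda>p. complex_of_real (fst p) + \<i> * complex_of_real (snd p))"
    by (auto simp: complex_eq_iff)
  then show ?thesis by simp
qed

lemma lborel_complex_pair:
  "(lborel :: complex measure) = distr (lborel \<Otimes>\<^sub>M lborel) borel (\<lambda>(x,y). Complex x y)"
proof (rule lborel_eqI)
  fix l u :: complex
  assume le: "\<And>b. b \<in> Basis \<Longrightarrow> l \<bullet> b \<le> u \<bullet> b"
  have le1: "Re l \<le> Re u" "Im l \<le> Im u"
    using le[of 1] le[of \<i>] by (auto simp: Basis_complex_def inner_complex_def)
  have pre: "(\<lambda>(x,y). Complex x y) -` box l u \<inter> space (lborel \<Otimes>\<^sub>M lborel) = {Re l<..<Re u} \<times> {Im l<..<Im u}"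
    by (auto simp: box_def Basis_complex_def inner_complex_def space_pair_measure)
  have "emeasure (distr (lborel \<Otimes>\<^sub>M lborel) borel (\<lambda>(x,y). Complex x y)) (box l u)
      = emeasure (lborel \<Otimes>\<^sub>M lborel) ({Re l<..<Re u} \<times> {Im l<..<Im u})"
    by (subst emeasure_distr) (auto simp: pre)
  also have "\<dots> = ennreal ((Re u - Re l) * (Im u - Im l))"
    using le1 by (simp add: lborel.emeasure_pair_measure_Times ennreal_mult)
  also have "(Re u - Re l) * (Im u - Im l) = (\<Prod>b\<in>Basis. (u - l) \<bullet> b)"
    by (simp add: Basis_complex_def inner_complex_def)
  finally show "emeasure (distr (lborel \<Otimes>\<^sub>M lborel) borel (\<lambda>(x,y). Complex x y)) (box l u) = (\<Prod>b\<in>Basis. (u - l) \<bullet> b)" .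
qed simp

lemma nn_integral_complex:
  fixes F :: "complex \<Rightarrow> ennreal"
  assumes [measurable]: "F \<in> borel_measurable borel"
  shows "(\<integral>\<^sup>+ z. F z \<partial>lborel) = (\<integral>\<^sup>+ x. \<integral>\<^sup>+ y. F (Complex x y) \<partial>lborel \<partial>lborel)"
proof -
  have "(\<integral>\<^sup>+ z. F z \<partial>lborel) = (\<integral>\<^sup>+ p. F ((\<lambda>(x,y). Complex x y) p) \<partial>(lborel \<Otimes>\<^sub>M lborel))"
    by (subst lborel_complex_pair) (simp add: nn_integral_distr)
  also have "\<dots> = (\<integral>\<^sup>+ x. \<integral>\<^sup>+ y. F (Complex x y) \<partial>lborel \<partial>lborel)"
    using lborel.nn_integral_fst[of "\<lambda>(x,y). F (Complex x y)" lborel] by (simp add: case_prod_unfold)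
  finally show ?thesis .
qed


lemma borel_measurable_Complex[measurable]:
  assumes [measurable]: "f \<in> borel_measurable M" "g \<in> borel_measurable M"
  shows "(\<lambda>x. Complex (f x) (g x)) \<in> borel_measurable M"
proof -
  have "(\<lambda>x. Complex (f x) (g x)) = (\<lambda>x. complex_of_real (f x) + \<i> * complex_of_real (g x))"
    by (auto simp: complex_eq_iff)
  then show ?thesis by simp
qed

lemma nn_integral_shear_x:
  fixes F :: "complex \<Rightarrow> ennreal"
  assumes [measurable]: "F \<in> borel_measurable borel"
  shows "(\<integral>\<^sup>+ z. F (z + complex_of_real (a * Im z)) \<partial>lborel) = (\<integral>\<^sup>+ z. F z \<partial>lborel)"
proof -
  have "(\<integral>\<^sup>+ z. F (z + complex_of_real (a * Im z)) \<partial>lborel)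
      = (\<integral>\<^sup>+ x. \<integral>\<^sup>+ y. F (Complex (x + a * y) y) \<partial>lborel \<partial>lborel)"
    by (subst nn_integral_complex) (auto intro!: nn_integral_cong arg_cong[where f=F] simp: complex_eq_iff)
  also have "\<dots> = (\<integral>\<^sup>+ y. \<integral>\<^sup>+ x. F (Complex (x + a * y) y) \<partial>lborel \<partial>lborel)"
    by (rule lborel_pair.Fubini'[symmetric]) measurable
  also have "\<dots> = (\<integral>\<^sup>+ y. \<integral>\<^sup>+ x. F (Complex x y) \<partial>lborel \<partial>lborel)"
  proof (rule nn_integral_cong)
    fix y :: real
    show "(\<integral>\<^sup>+ x. F (Complex (x + a * y) y) \<partial>lborel) = (\<integral>\<^sup>+ x. F (Complex x y) \<partial>lborel)"
      using nn_integral_real_affine[of "\<lambda>x. F (Complex x y)" 1 "a * y"] by (simp add: add.commute)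
  qed
  also have "\<dots> = (\<integral>\<^sup>+ x. \<integral>\<^sup>+ y. F (Complex x y) \<partial>lborel \<partial>lborel)"
    by (rule lborel_pair.Fubini') measurable
  also have "\<dots> = (\<integral>\<^sup>+ z. F z \<partial>lborel)"
    by (subst nn_integral_complex) auto
  finally show ?thesis .
qed

lemma nn_integral_shear_y:
  fixes F :: "complex \<Rightarrow> ennreal"
  assumes [measurable]: "F \<in> borel_measurable borel"
  shows "(\<integral>\<^sup>+ z. F (z + \<i> * complex_of_real (b * Re z)) \<partial>lborel) = (\<integral>\<^sup>+ z. F z \<partial>lborel)"
proof -
  have "(\<integral>\<^sup>+ z. F (z + \<i> * complex_of_real (b * Re z)) \<partial>lborel)
      = (\<integral>\<^sup>+ x. \<integral>\<^sup>+ y. F (Complex x (y + b * x)) \<partial>lborel \<partial>lborel)"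
    by (subst nn_integral_complex) (auto intro!: nn_integral_cong arg_cong[where f=F] simp: complex_eq_iff)
  also have "\<dots> = (\<integral>\<^sup>+ x. \<integral>\<^sup>+ y. F (Complex x y) \<partial>lborel \<partial>lborel)"
  proof (rule nn_integral_cong)
    fix x :: real
    show "(\<integral>\<^sup>+ y. F (Complex x (y + b * x)) \<partial>lborel) = (\<integral>\<^sup>+ y. F (Complex x y) \<partial>lborel)"
      using nn_integral_real_affine[of "\<lambda>y. F (Complex x y)" 1 "b * x"] by (simp add: add.commute)
  qed
  also have "\<dots> = (\<integral>\<^sup>+ z. F z \<partial>lborel)"
    by (subst nn_integral_complex) auto
  finally show ?thesis .
qed

lemma nn_integral_rotate_aux:
  fixes F :: "complex \<Rightarrow> ennreal" and c :: complex
  assumes [measurable]: "F \<in> borel_measurable borel" and c: "norm c = 1" "Im c \<noteq> 0"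
  shows "(\<integral>\<^sup>+ z. F (c * z) \<partial>lborel) = (\<integral>\<^sup>+ z. F z \<partial>lborel)"
proof -
  define a where "a = (Re c - 1) / Im c"
  define s where "s = Im c"
  define S1 where "S1 = (\<lambda>z. z + complex_of_real (a * Im z))"
  define S2 where "S2 = (\<lambda>z. z + \<i> * complex_of_real (s * Re z))"
  have [measurable]: "S1 \<in> borel_measurable borel" "S2 \<in> borel_measurable borel"
    unfolding S1_def S2_def by measurable
  have n: "(Re c)^2 + (Im c)^2 = 1" using c(1) by (simp add: cmod_def)
  have "c * z = S1 (S2 (S1 z))" for z
  proof -
    have e1: "1 + a * s = Re c" using c(2) by (simp add: a_def s_def field_simps)
    have e2: "a * (2 + a * s) = - Im c"
    proof -
      have "a * (2 + a * s) = a * (1 + Re c)" using e1 by simp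
      also have "\<dots> = ((Re c)^2 - 1) / Im c" using c(2) by (simp add: a_def field_simps power2_eq_square)
      also have "\<dots> = - Im c" using n c(2) by (simp add: field_simps power2_eq_square)
      finally show ?thesis .
    qed
    have r: "Re (S1 (S2 (S1 z))) = (1 + a * s) * Re z + a * (2 + a * s) * Im z"
      unfolding S1_def S2_def by (simp add: algebra_simps)
    have i: "Im (S1 (S2 (S1 z))) = s * Re z + (1 + a * s) * Im z"
      unfolding S1_def S2_def by (simp add: algebra_simps)
    show ?thesis
      unfolding complex_eq_iff r i e1 e2 by (simp add: s_def)
  qed
  then have "(\<integral>\<^sup>+ z. F (c * z) \<partial>lborel) = (\<integral>\<^sup>+ z. F (S1 (S2 (S1 z))) \<partial>lborel)" by simp
  also have "\<dots> = (\<integral>\<^sup>+ z. F (S1 (S2 z)) \<partial>lborel)"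
    using nn_integral_shear_x[of "\<lambda>z. F (S1 (S2 z))" a] by (simp add: S1_def)
  also have "\<dots> = (\<integral>\<^sup>+ z. F (S1 z) \<partial>lborel)"
    using nn_integral_shear_y[of "\<lambda>z. F (S1 z)" s] by (simp add: S2_def)
  also have "\<dots> = (\<integral>\<^sup>+ z. F z \<partial>lborel)"
    using nn_integral_shear_x[of F a] by (simp add: S1_def)
  finally show ?thesis .
qed

lemma nn_integral_rotate:
  fixes F :: "complex \<Rightarrow> ennreal" and c :: complex
  assumes [measurable]: "F \<in> borel_measurable borel" and c: "norm c = 1"
  shows "(\<integral>\<^sup>+ z. F (c * z) \<partial>lborel) = (\<integral>\<^sup>+ z. F z \<partial>lborel)"
proof (cases "Im c = 0")
  case False then show ?thesis using nn_integral_rotate_aux assms by blast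
next
  case True
  then have "Re c = 1 \<or> Re c = -1" using c by (auto simp: cmod_def)
  then have "c = 1 \<or> c = \<i> * \<i>" using True by (auto simp: complex_eq_iff)
  then show ?thesis
  proof
    assume "c = \<i> * \<i>"
    then have "(\<integral>\<^sup>+ z. F (c * z) \<partial>lborel) = (\<integral>\<^sup>+ z. (\<lambda>u. F (\<i> * u)) (\<i> * z) \<partial>lborel)"
      by (simp add: mult.assoc)
    also have "\<dots> = (\<integral>\<^sup>+ z. F (\<i> * z) \<partial>lborel)"
      by (rule nn_integral_rotate_aux) auto
    also have "\<dots> = (\<integral>\<^sup>+ z. F z \<partial>lborel)"
      by (rule nn_integral_rotate_aux) auto
    finally show ?thesis .
  qed simp
qed



definition hh :: "real \<Rightarrow> real" where
  "hh x = indicator {1..} x * x powr (-2)"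

lemma hh_nn: "hh x \<ge> 0" by (simp add: hh_def)

lemma hh_meas[measurable]: "hh \<in> borel_measurable borel"
  unfolding hh_def by measurable

lemma nn_integral_hh: "(\<integral>\<^sup>+ x. ennreal (hh x) \<partial>lborel) = 1"
proof -
  have "((\<lambda>x::real. x powr (-2)) has_integral (- (1 powr (-2+1)) / (-2+1))) {1..}"
    by (rule has_integral_powr_to_inf) auto
  then have "((\<lambda>x::real. x powr (-2)) has_integral 1) {1..}" by simp
  from nn_integral_has_integral_lebesgue[OF _ this]
  show ?thesis unfolding hh_def by simp
qed

lemma nn_integral_hh_neg: "(\<integral>\<^sup>+ x. ennreal (hh (-x)) \<partial>lborel) = 1"
  using nn_integral_real_affine[of "\<lambda>x. ennreal (hh x)" "-1" 0] nn_integral_hh by simp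

definition hb :: "real \<Rightarrow> real" where
  "hb x = indicator {-1..1} x + hh x + hh (-x)"

lemma hb_nonneg: "hb x \<ge> 0" by (simp add: hb_def hh_nn)

lemma hb_meas[measurable]: "hb \<in> borel_measurable borel"
  unfolding hb_def by measurable

lemma nn_integral_hb: "(\<integral>\<^sup>+ x. ennreal (hb x) \<partial>lborel) < \<infinity>"
proof -
  have "(\<integral>\<^sup>+ x. ennreal (hb x) \<partial>lborel) = (\<integral>\<^sup>+ x. indicator {-1..1} x + ennreal (hh x) + ennreal (hh (-x)) \<partial>lborel)"
    by (intro nn_integral_cong) (simp add: hb_def hh_nn ennreal_plus indicator_def)
  also have "\<dots> = (\<integral>\<^sup>+ x. indicator {-1..1} x + ennreal (hh x) \<partial>lborel) + (\<integral>\<^sup>+ x. ennreal (hh (-x)) \<partial>lborel)"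
    by (rule nn_integral_add) auto
  also have "(\<integral>\<^sup>+ x. indicator {-1..1} x + ennreal (hh x) \<partial>lborel) = (\<integral>\<^sup>+ x. indicator {-1..1::real} x \<partial>lborel) + (\<integral>\<^sup>+ x. ennreal (hh x) \<partial>lborel)"
    by (rule nn_integral_add) auto
  finally have eq: "(\<integral>\<^sup>+ x. ennreal (hb x) \<partial>lborel) = (\<integral>\<^sup>+ x. indicator {-1..1::real} x \<partial>lborel) + (\<integral>\<^sup>+ x. ennreal (hh x) \<partial>lborel) + (\<integral>\<^sup>+ x. ennreal (hh (-x)) \<partial>lborel)" .
  show ?thesis unfolding eq by (simp add: nn_integral_hh nn_integral_hh_neg)
qed

lemma exp_powr_bound:
  fixes d m :: real
  assumes d: "d > 0" and m: "m > 0"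
  shows "\<exists>K>0. \<forall>x::real. exp (- d * \<bar>x\<bar> powr m) \<le> K * hb x"
proof -
  define k :: nat where "k = nat \<lceil>2 / m\<rceil> + 1"
  have kpos: "k > 0" by (simp add: k_def)
  have km: "real k * m \<ge> 2"
  proof -
    have "real k \<ge> 2 / m" unfolding k_def by linarith
    then show ?thesis using m by (simp add: field_simps)
  qed
  define K where "K = max 1 ((real k / d) ^ k)"
  have K1: "K \<ge> 1" by (simp add: K_def)
  have hb1: "hb x \<ge> 0" for x by (simp add: hb_def hh_nn)
  show ?thesis
  proof (intro exI[of _ K] conjI allI)
    show "K > 0" using K1 by simp
    fix x :: real
    show "exp (- d * \<bar>x\<bar> powr m) \<le> K * hb x"
    proof (cases "\<bar>x\<bar> \<le> 1")
      case True
      then have "indicator {-1..1} x = (1::real)" by (auto simp: indicator_def)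
      then have "hb x \<ge> 1" by (simp add: hb_def hh_nn)
      moreover have "exp (- d * \<bar>x\<bar> powr m) \<le> 1" using d by simp
      moreover have "1 * 1 \<le> K * hb x" by (rule mult_mono) (use K1 \<open>hb x \<ge> 1\<close> in auto)
      ultimately show ?thesis by linarith
    next
      case False
      define y where "y = \<bar>x\<bar>"
      have y1: "y > 1" using False by (simp add: y_def)
      define u where "u = d * y powr m"
      have u0: "u \<ge> 0" using d by (simp add: u_def)
      have "(1 + u / real k) ^ k \<le> exp u"
        by (rule exp_ge_one_plus_x_over_n_power_n) (use u0 kpos in auto)
      moreover have "(u / real k) ^ k \<le> (1 + u / real k) ^ k"
        by (rule power_mono) (use u0 in auto)
      moreover have "(u / real k) ^ k = (d / real k) ^ k * y powr (real k * m)"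
        using y1 by (simp add: u_def power_mult_distrib powr_realpow[symmetric] powr_powr field_simps
                     flip: powr_realpow)
      moreover have "y powr (real k * m) \<ge> y powr 2"
        by (rule powr_mono) (use km y1 in auto)
      moreover have "(d / real k) ^ k * y powr 2 \<le> (d / real k) ^ k * y powr (real k * m)"
        by (rule mult_left_mono) (use \<open>y powr (real k * m) \<ge> y powr 2\<close> d in auto)
      ultimately have le: "(d / real k) ^ k * y powr 2 \<le> exp u"
        by linarith
      have pos: "(d / real k) ^ k * y powr 2 > 0" using d kpos y1 by simp
      have "exp (- d * \<bar>x\<bar> powr m) = 1 / exp u" by (simp add: u_def y_def exp_minus field_simps)
      also have "\<dots> \<le> 1 / ((d / real k) ^ k * y powr 2)"
        using le pos by (simp add: frac_le)
      also have "\<dots> = (real k / d) ^ k * y powr (-2)"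
        using d kpos y1 by (simp add: powr_minus power_divide field_simps)
      also have "\<dots> \<le> K * y powr (-2)"
        by (rule mult_right_mono) (auto simp: K_def)
      also have "y powr (-2) \<le> hb x"
      proof -
        have "hh x + hh (-x) = y powr (-2)"
          using False by (auto simp: hh_def y_def indicator_def abs_if)
        moreover have "indicator {-1..1} x = (0::real)" using False by (auto simp: indicator_def)
        ultimately show ?thesis by (simp add: hb_def)
      qed
      then have "K * y powr (-2) \<le> K * hb x" using K1 by simp
      finally show ?thesis .
    qed
  qed
qed

lemma nn_integral_exp_finite:
  fixes c m :: real
  assumes c: "c > 0" and m: "m > 0"
  shows "(\<integral>\<^sup>+ z. ennreal (exp (- c * norm (z::complex) powr m)) \<partial>lborel) < \<infinity>"
proof -
  obtain K where K: "K > 0" "\<And>x::real. exp (- (c/2) * \<bar>x\<bar> powr m) \<le> K * hb x"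
    using exp_powr_bound[of "c/2" m] c m by auto
  define E where "E = (\<lambda>x::real. exp (- (c/2) * \<bar>x\<bar> powr m))"
  have [measurable]: "E \<in> borel_measurable borel" unfolding E_def by measurable
  have bnd: "exp (- c * norm z powr m) \<le> E (Re z) * E (Im z)" for z :: complex
  proof -
    have "\<bar>Re z\<bar> powr m \<le> norm z powr m" by (rule powr_mono2) (use m abs_Re_le_cmod in auto)
    moreover have "\<bar>Im z\<bar> powr m \<le> norm z powr m" by (rule powr_mono2) (use m abs_Im_le_cmod in auto)
    ultimately have "(c/2) * \<bar>Re z\<bar> powr m \<le> (c/2) * norm z powr m" "(c/2) * \<bar>Im z\<bar> powr m \<le> (c/2) * norm z powr m"
      using c by (auto intro: mult_left_mono)
    then have "- c * norm z powr m \<le> - (c/2) * \<bar>Re z\<bar> powr m + - (c/2) * \<bar>Im z\<bar> powr m"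
      by linarith
    then show ?thesis by (simp add: E_def flip: exp_add)
  qed
  have "(\<integral>\<^sup>+ z. ennreal (exp (- c * norm (z::complex) powr m)) \<partial>lborel) \<le> (\<integral>\<^sup>+ z. ennreal (E (Re z)) * ennreal (E (Im z)) \<partial>lborel)"
  proof (rule nn_integral_mono)
    fix z :: complex
    have "E (Re z) \<ge> 0" "E (Im z) \<ge> 0" by (auto simp: E_def)
    then show "ennreal (exp (- c * norm z powr m)) \<le> ennreal (E (Re z)) * ennreal (E (Im z))"
      using bnd[of z] by (simp flip: ennreal_mult)
  qed
  also have "\<dots> = (\<integral>\<^sup>+ x. \<integral>\<^sup>+ y. ennreal (E x) * ennreal (E y) \<partial>lborel \<partial>lborel)"
    by (subst nn_integral_complex) auto
  also have "\<dots> = (\<integral>\<^sup>+ x. ennreal (E x) * (\<integral>\<^sup>+ y. ennreal (E y) \<partial>lborel) \<partial>lborel)"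
    by (subst nn_integral_cmult) auto
  also have "\<dots> = (\<integral>\<^sup>+ x. ennreal (E x) \<partial>lborel) * (\<integral>\<^sup>+ y. ennreal (E y) \<partial>lborel)"
    by (subst nn_integral_multc) auto
  also have "\<dots> < \<infinity>"
  proof -
    have "(\<integral>\<^sup>+ x. ennreal (E x) \<partial>lborel) \<le> (\<integral>\<^sup>+ x. ennreal K * ennreal (hb x) \<partial>lborel)"
      by (intro nn_integral_mono) (use K hb_nonneg in \<open>simp add: E_def flip: ennreal_mult\<close>)
    also have "\<dots> = ennreal K * (\<integral>\<^sup>+ x. ennreal (hb x) \<partial>lborel)"
      by (subst nn_integral_cmult) auto
    also have "\<dots> < \<infinity>" using nn_integral_hb by (simp add: ennreal_mult_less_top)
    finally have "(\<integral>\<^sup>+ x. ennreal (E x) \<partial>lborel) < \<infinity>" .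
    then show ?thesis by (simp add: ennreal_mult_less_top)
  qed
  finally show ?thesis .
qed



lemma tangent_powr:
  fixes a x p :: real
  assumes a: "a \<ge> 0" and x: "x \<ge> 0" and p: "p \<ge> 1"
  shows "p * a powr (p - 1) * x \<le> x powr p + (p - 1) * a powr p"
proof (cases "a = 0")
  case True
  then show ?thesis using x p by simp
next
  case False
  then have apos: "a > 0" using a by simp
  show ?thesis
  proof (cases "p = 1")
    case True then show ?thesis using apos x by simp
  next
    case False
    then have p1: "p > 1" using p by simp
    define q where "q = p / (p - 1)"
    have q1: "q > 1" using p1 by (simp add: q_def field_simps)
    have pq: "1/p + 1/q = 1" using p1 by (simp add: q_def field_simps)
    have "x * a powr (p - 1) \<le> x powr p / p + (a powr (p - 1)) powr q / q"
      by (rule Youngs_inequality) (use p1 q1 pq x in auto)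
    also have "(a powr (p - 1)) powr q = a powr p"
      using p1 by (simp add: powr_powr q_def)
    finally have "x * a powr (p - 1) \<le> x powr p / p + a powr p / q" .
    then have "p * (x * a powr (p - 1)) \<le> p * (x powr p / p + a powr p / q)"
      using p1 by (simp add: mult_left_mono)
    also have "\<dots> = x powr p + (p - 1) * a powr p"
      using p1 by (simp add: q_def field_simps)
    finally show ?thesis by (simp add: mult_ac)
  qed
qed

lemma power_jensen:
  fixes P X :: "real \<Rightarrow> real" and p :: real
  assumes p: "p \<ge> 1"
    and cP: "continuous_on {0..1} P" and cX: "continuous_on {0..1} X"
    and P0: "\<And>s. s \<in> {0..1} \<Longrightarrow> P s \<ge> 0" and X0: "\<And>s. s \<in> {0..1} \<Longrightarrow> X s \<ge> 0"
    and P1: "integral {0..1} P = 1"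
  shows "(integral {0..1} (\<lambda>s. P s * X s)) powr p \<le> integral {0..1} (\<lambda>s. P s * X s powr p)"
proof -
  define a where "a = integral {0..1} (\<lambda>s. P s * X s)"
  have cXp: "continuous_on {0..1} (\<lambda>s. X s powr p)"
    by (rule continuous_on_powr') (use cX X0 p in \<open>auto intro: continuous_intros\<close>)
  have i1: "(\<lambda>s. P s * X s) integrable_on {0..1}"
    by (intro integrable_continuous_real continuous_intros cP cX)
  have i2: "(\<lambda>s. P s * X s powr p) integrable_on {0..1}"
    by (intro integrable_continuous_real continuous_intros cP cXp)
  have iP: "P integrable_on {0..1}" by (intro integrable_continuous_real cP)
  have a0: "a \<ge> 0" unfolding a_def
    by (rule integral_nonneg[OF i1]) (use P0 X0 in auto)
  show ?thesis
  proof (cases "a = 0")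
    case True
    have "integral {0..1} (\<lambda>s. P s * X s powr p) \<ge> 0"
      by (rule integral_nonneg[OF i2]) (use P0 X0 in auto)
    then show ?thesis using True by (simp add: a_def)
  next
    case False
    then have apos: "a > 0" using a0 by simp
    have "integral {0..1} (\<lambda>s. P s * (p * a powr (p - 1) * X s))
          \<le> integral {0..1} (\<lambda>s. P s * X s powr p + (p - 1) * a powr p * P s)"
    proof (rule integral_le)
      show "(\<lambda>s. P s * (p * a powr (p - 1) * X s)) integrable_on {0..1}"
        by (intro integrable_continuous_real continuous_intros cP cX)
      show "(\<lambda>s. P s * X s powr p + (p - 1) * a powr p * P s) integrable_on {0..1}"
        by (intro integrable_continuous_real continuous_intros cP cXp)
      fix s :: real assume s: "s \<in> {0..1}"
      have "P s * (p * a powr (p - 1) * X s) \<le> P s * (X s powr p + (p - 1) * a powr p)"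
        by (rule mult_left_mono[OF tangent_powr]) (use a0 X0 s P0 p in auto)
      then show "P s * (p * a powr (p - 1) * X s) \<le> P s * X s powr p + (p - 1) * a powr p * P s"
        by (simp add: algebra_simps)
    qed
    also have "integral {0..1} (\<lambda>s. P s * (p * a powr (p - 1) * X s)) = p * a powr (p - 1) * a"
    proof -
      have "integral {0..1} (\<lambda>s. (p * a powr (p - 1)) * (P s * X s)) = (p * a powr (p - 1)) * a"
        unfolding a_def by (rule integral_mult_right)
      then show ?thesis by (simp add: algebra_simps)
    qed
    also have "integral {0..1} (\<lambda>s. P s * X s powr p + (p - 1) * a powr p * P s)
             = integral {0..1} (\<lambda>s. P s * X s powr p) + (p - 1) * a powr p"
    proof -
      have iP': "(\<lambda>s. (p - 1) * a powr p * P s) integrable_on {0..1}"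
        by (intro integrable_continuous_real continuous_intros cP)
      have "integral {0..1} (\<lambda>s. P s * X s powr p + (p - 1) * a powr p * P s)
          = integral {0..1} (\<lambda>s. P s * X s powr p) + integral {0..1} (\<lambda>s. (p - 1) * a powr p * P s)"
        by (rule integral_add[OF i2 iP'])
      also have "integral {0..1} (\<lambda>s. (p - 1) * a powr p * P s) = (p - 1) * a powr p * integral {0..1} P"
        by (rule integral_mult_right)
      finally show ?thesis using P1 by simp
    qed
    finally have "p * a powr (p - 1) * a \<le> integral {0..1} (\<lambda>s. P s * X s powr p) + (p - 1) * a powr p" .
    moreover have "a powr (p - 1) * a = a powr p"
      using apos by (simp add: powr_diff)
    ultimately have "p * a powr p \<le> integral {0..1} (\<lambda>s. P s * X s powr p) + (p - 1) * a powr p"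
      by (simp add: mult.assoc)
    then show ?thesis by (simp add: a_def algebra_simps)
  qed
qed



definition ee :: "real \<Rightarrow> complex" where
  "ee s = exp (2 * of_real pi * \<i> * of_real s)"

definition PK :: "real \<Rightarrow> real \<Rightarrow> real" where
  "PK t s = (1 - t^2) / (cmod (ee s - of_real t))^2"

lemma norm_ee [simp]: "norm (ee s) = 1"
  by (simp add: ee_def)

lemma circlepath01: "circlepath 0 1 = ee"
  by (simp add: circlepath ee_def fun_eq_iff)

lemma continuous_ee [continuous_intros]: "continuous_on S ee"
  unfolding ee_def by (intro continuous_intros)

lemma ee_minus_t:
  assumes "0 \<le> t" "t < 1"
  shows "cmod (ee s - of_real t) \<ge> 1 - t"
proof -
  have "norm (ee s) - norm (of_real t :: complex) \<le> cmod (ee s - of_real t)"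
    by (rule norm_triangle_ineq2)
  then show ?thesis using assms by simp
qed

lemma PK_nonneg: "0 \<le> t \<Longrightarrow> t < 1 \<Longrightarrow> PK t s \<ge> 0"
  unfolding PK_def by (intro divide_nonneg_nonneg) (use power_le_one[of t 2] in auto)

lemma continuous_PK:
  assumes "0 \<le> t" "t < 1"
  shows "continuous_on S (PK t)"
proof -
  have "cmod (ee s - of_real t) \<noteq> 0" for s using ee_minus_t[OF assms, of s] assms by linarith
  then show ?thesis unfolding PK_def by (intro continuous_intros) auto
qed

lemma poisson_kernel_identity:
  fixes t :: real and u :: complex
  assumes t: "0 \<le> t" "t < 1" and u: "norm u = 1"
  shows "u / (u - of_real t) + of_real t * u / (1 - of_real t * u)
         = of_real ((1 - t^2) / (cmod (u - of_real t))^2)"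
proof -
  have u0: "u \<noteq> 0" using u by auto
  have cu: "cnj u = 1 / u"
  proof -
    have "u * cnj u = 1" using complex_norm_square[of u] u by simp
    then show ?thesis using u0 by (simp add: field_simps)
  qed
  have d1: "u - of_real t \<noteq> 0"
  proof
    assume "u - of_real t = 0"
    then have "u = of_real t" by simp
    then have "norm u = t" using t by simp
    then show False using u t by simp
  qed
  have d2: "1 - of_real t * u \<noteq> 0"
  proof
    assume "1 - of_real t * u = 0"
    then have "of_real t * u = 1" by simp
    then have "norm (of_real t * u) = 1" by simp
    then show False using u t by (simp add: norm_mult)
  qed
  have nsq: "complex_of_real ((cmod (u - of_real t))^2) = (u - of_real t) * (1 / u - of_real t)"
  proof -
    have "complex_of_real ((cmod (u - of_real t))^2) = (u - of_real t) * cnj (u - of_real t)"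
      by (rule complex_norm_square)
    also have "\<dots> = (u - of_real t) * (1 / u - of_real t)" by (simp add: cu)
    finally show ?thesis .
  qed
  have nz: "complex_of_real ((cmod (u - of_real t))^2) \<noteq> 0"
    using d1 by simp
  have e0: "1 / u - of_real t = (1 - of_real t * u) / u"
    using u0 by (simp add: diff_divide_distrib)
  have e1: "(u - of_real t) * (1 / u - of_real t) = (u - of_real t) * ((1 - of_real t * u) / u)"
    by (simp only: e0)
  have e2: "u / (u - of_real t) + of_real t * u / (1 - of_real t * u)
        = (u * (1 - of_real t * u) + of_real t * u * (u - of_real t)) / ((u - of_real t) * (1 - of_real t * u))"
    using d1 d2 by (rule add_frac_eq)
  have e3: "u * (1 - of_real t * u) + of_real t * u * (u - of_real t) = u * (1 - (of_real t)^2)"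
    by (simp add: algebra_simps power2_eq_square)
  have e4: "complex_of_real (1 - t^2) / ((u - of_real t) * ((1 - of_real t * u) / u))
       = u * (1 - (of_real t)^2) / ((u - of_real t) * (1 - of_real t * u))"
    by (simp add: divide_divide_eq_right mult.commute)
  have "of_real ((1 - t^2) / (cmod (u - of_real t))^2) = complex_of_real (1 - t^2) / complex_of_real ((cmod (u - of_real t))^2)"
    by (simp only: of_real_divide)
  also have "\<dots> = complex_of_real (1 - t^2) / ((u - of_real t) * (1 / u - of_real t))"
    by (simp only: nsq)
  also have "\<dots> = complex_of_real (1 - t^2) / ((u - of_real t) * ((1 - of_real t * u) / u))"
    by (simp only: e1)
  also have "\<dots> = u * (1 - (of_real t)^2) / ((u - of_real t) * (1 - of_real t * u))"
    by (rule e4)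
  also have "\<dots> = u / (u - of_real t) + of_real t * u / (1 - of_real t * u)"
    by (simp only: e2 e3)
  finally show ?thesis by simp
qed

lemma poisson_formula:
  assumes holg: "g holomorphic_on UNIV" and t: "0 \<le> t" "t < 1"
  shows "((\<lambda>s. of_real (PK t s) * g (ee s)) has_integral g (of_real t)) {0..1}"
proof -
  have A: "((\<lambda>u. g u / (u - of_real t)) has_contour_integral (2 * of_real pi * \<i> * g (of_real t))) (circlepath 0 1)"
    by (rule Cauchy_integral_circlepath_simple) (use holg t in \<open>auto intro: holomorphic_on_subset\<close>)
  define R where "R = 2 / (1 + t)"
  have R1: "R > 1" using t by (simp add: R_def field_simps)
  have nz: "1 - of_real t * u \<noteq> 0" if "u \<in> ball 0 R" for u :: complex
  proof
    assume "1 - of_real t * u = 0"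
    then have "of_real t * u = 1" by simp
    then have "norm (of_real t * u) = 1" by simp
    then have "t * norm u = 1" using t by (simp add: norm_mult)
    moreover have "t * norm u \<le> t * R" using that t by (intro mult_left_mono) auto
    moreover have "t * R < 1" using t by (simp add: R_def field_simps)
    ultimately show False by linarith
  qed
  have B: "((\<lambda>u. g u * of_real t / (1 - of_real t * u)) has_contour_integral 0) (circlepath 0 1)"
  proof (rule Cauchy_theorem_convex_simple[where S = "ball 0 R"])
    show "(\<lambda>u. g u * of_real t / (1 - of_real t * u)) holomorphic_on ball 0 R"
      using nz by (intro holomorphic_intros holomorphic_on_subset[OF holg]) auto
    show "path_image (circlepath 0 1) \<subseteq> ball 0 R"
      using R1 by (auto simp: path_image_circlepath_nonneg)
  qed auto
  have C: "((\<lambda>u. g u / (u - of_real t) + g u * of_real t / (1 - of_real t * u)) has_contour_integral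
          (2 * of_real pi * \<i> * g (of_real t) + 0)) (circlepath 0 1)"
    by (rule has_contour_integral_add[OF A B])
  then have C': "((\<lambda>x. (g (ee x) / (ee x - of_real t) + g (ee x) * of_real t / (1 - of_real t * ee x)) *
         vector_derivative (circlepath 0 1) (at x within {0..1})) has_integral (2 * of_real pi * \<i> * g (of_real t))) {0..1}"
    unfolding has_contour_integral_def circlepath01 by simp
  have C'': "((\<lambda>x. (2 * of_real pi * \<i>) * (of_real (PK t x) * g (ee x))) has_integral (2 * of_real pi * \<i> * g (of_real t))) {0..1}"
  proof (rule has_integral_spike_eq[THEN iffD1, OF negligible_empty _ C'])
    fix x :: real assume x: "x \<in> {0..1} - {}"
    have vd: "vector_derivative (circlepath 0 1) (at x within {0..1}) = 2 * of_real pi * \<i> * ee x"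
      using vector_derivative_circlepath01[of x 0 1] x by (simp add: ee_def)
    have "(g (ee x) / (ee x - of_real t) + g (ee x) * of_real t / (1 - of_real t * ee x)) * (2 * of_real pi * \<i> * ee x)
        = (2 * of_real pi * \<i>) * (g (ee x) * (ee x / (ee x - of_real t) + of_real t * ee x / (1 - of_real t * ee x)))"
      by (simp add: divide_inverse distrib_left distrib_right mult_ac)
    also have "\<dots> = (2 * of_real pi * \<i>) * (of_real (PK t x) * g (ee x))"
      using poisson_kernel_identity[OF t norm_ee[of x]] by (simp add: PK_def)
    finally have "(g (ee x) / (ee x - of_real t) + g (ee x) * of_real t / (1 - of_real t * ee x)) *
         vector_derivative (circlepath 0 1) (at x within {0..1}) = (2 * of_real pi * \<i>) * (of_real (PK t x) * g (ee x))"
      by (simp add: vd)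
    then show "(2 * of_real pi * \<i>) * (of_real (PK t x) * g (ee x)) = (g (ee x) / (ee x - of_real t) + g (ee x) * of_real t / (1 - of_real t * ee x)) *
         vector_derivative (circlepath 0 1) (at x within {0..1})" by (rule sym)
  qed
  define c :: complex where "c = 2 * of_real pi * \<i>"
  have c0: "c \<noteq> 0" by (simp add: c_def)
  have "((\<lambda>x. inverse c * (c * (of_real (PK t x) * g (ee x))))
        has_integral inverse c * (c * g (of_real t))) {0..1}"
    by (rule has_integral_mult_right) (use C'' in \<open>simp add: c_def\<close>)
  moreover have "\<And>y. inverse c * (c * y) = y" using c0 by (simp add: mult.assoc[symmetric])
  ultimately show ?thesis by simp
qed

lemma integral_PK:
  assumes t: "0 \<le> t" "t < 1"
  shows "integral {0..1} (PK t) = 1"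
proof -
  have "((\<lambda>s. of_real (PK t s) * (\<lambda>_. 1::complex) (ee s)) has_integral (\<lambda>_. 1::complex) (of_real t)) {0..1}"
    by (rule poisson_formula[OF _ t]) auto
  then have h1: "((\<lambda>s. complex_of_real (PK t s)) has_integral 1) {0..1}" by simp
  have "PK t integrable_on {0..1}"
    by (intro integrable_continuous_real continuous_PK t)
  then have "(PK t has_integral integral {0..1} (PK t)) {0..1}" by (rule integrable_integral)
  from has_integral_of_real[OF this] have "((\<lambda>s. complex_of_real (PK t s)) has_integral of_real (integral {0..1} (PK t))) {0..1}" .
  from has_integral_unique[OF this h1] show ?thesis by simp
qed

lemma poisson_ineq:
  assumes holg: "g holomorphic_on UNIV" and t: "0 \<le> t" "t < 1" and p: "p \<ge> 1"
  shows "norm (g (of_real t)) powr p \<le> integral {0..1} (\<lambda>s. PK t s * norm (g (ee s)) powr p)"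
proof -
  have cg: "continuous_on UNIV g" using holg by (rule holomorphic_on_imp_continuous_on)
  have cge: "continuous_on {0..1} (\<lambda>s. norm (g (ee s)))"
    by (intro continuous_intros continuous_on_compose2[OF cg]) auto
  have cPK: "continuous_on {0..1} (PK t)" by (rule continuous_PK[OF t])
  have "g (of_real t) = integral {0..1} (\<lambda>s. of_real (PK t s) * g (ee s))"
    using poisson_formula[OF holg t] by (simp add: integral_unique)
  then have "norm (g (of_real t)) \<le> integral {0..1} (\<lambda>s. PK t s * norm (g (ee s)))"
  proof -
    assume eq: "g (of_real t) = integral {0..1} (\<lambda>s. of_real (PK t s) * g (ee s))"
    have "norm (integral {0..1} (\<lambda>s. of_real (PK t s) * g (ee s))) \<le> integral {0..1} (\<lambda>s. PK t s * norm (g (ee s)))"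
    proof (rule integral_norm_bound_integral)
      show "(\<lambda>s. of_real (PK t s) * g (ee s)) integrable_on {0..1}"
        using poisson_formula[OF holg t] by blast
      show "(\<lambda>s. PK t s * norm (g (ee s))) integrable_on {0..1}"
        by (intro integrable_continuous_real continuous_intros cPK cge)
      fix s :: real assume "s \<in> {0..1}"
      show "norm (of_real (PK t s) * g (ee s)) \<le> PK t s * norm (g (ee s))"
        using PK_nonneg[OF t, of s] by (simp add: norm_mult)
    qed
    then show ?thesis using eq by simp
  qed
  then have "norm (g (of_real t)) powr p \<le> (integral {0..1} (\<lambda>s. PK t s * norm (g (ee s)))) powr p"
    using p by (intro powr_mono2) auto
  also have "\<dots> \<le> integral {0..1} (\<lambda>s. PK t s * norm (g (ee s)) powr p)"
    by (rule power_jensen[OF p cPK cge]) (use PK_nonneg[OF t] integral_PK[OF t] in auto)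
  finally show ?thesis .
qed

lemma poisson_ineq_nn:
  assumes holg: "g holomorphic_on UNIV" and t: "0 \<le> t" "t < 1" and p: "p \<ge> 1"
  shows "ennreal (norm (g (of_real t)) powr p)
     \<le> (\<integral>\<^sup>+ s. ennreal (PK t s * norm (g (ee s)) powr p) * indicator {0..1} s \<partial>lborel)"
proof -
  have cg: "continuous_on UNIV g" using holg by (rule holomorphic_on_imp_continuous_on)
  have cge: "continuous_on {0..1} (\<lambda>s. norm (g (ee s)) powr p)"
    by (intro continuous_on_powr' continuous_intros continuous_on_compose2[OF cg]) (use p in auto)
  have "(\<lambda>s. PK t s * norm (g (ee s)) powr p) integrable_on {0..1}"
    by (intro integrable_continuous_real continuous_intros continuous_PK t cge)
  then have hi: "((\<lambda>s. PK t s * norm (g (ee s)) powr p) has_integral integral {0..1} (\<lambda>s. PK t s * norm (g (ee s)) powr p)) {0..1}"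
    by (rule integrable_integral)
  have "(\<integral>\<^sup>+ s. ennreal (PK t s * norm (g (ee s)) powr p) * indicator {0..1} s \<partial>lborel)
     = ennreal (integral {0..1} (\<lambda>s. PK t s * norm (g (ee s)) powr p))"
    by (rule nn_integral_has_integral_lebesgue'[OF _ hi]) (use PK_nonneg[OF t] in auto)
  moreover have "norm (g (of_real t)) powr p \<le> integral {0..1} (\<lambda>s. PK t s * norm (g (ee s)) powr p)"
    by (rule poisson_ineq[OF holg t p])
  ultimately show ?thesis by (simp add: ennreal_leI)
qed



lemma meas_pair:
  fixes f :: "complex \<times> real \<Rightarrow> real"
  assumes "continuous_on UNIV f"
  shows "f \<in> borel_measurable (lborel \<Otimes>\<^sub>M lborel)"
proof -
  have "f \<in> borel_measurable borel" by (rule borel_measurable_continuous_onI[OF assms])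
  then show ?thesis unfolding lborel_prod by (simp add: measurable_lborel1)
qed

lemma nn_integral_PK:
  assumes t: "0 \<le> t" "t < 1"
  shows "(\<integral>\<^sup>+ s. ennreal (PK t s) * indicator {0..1} s \<partial>lborel) = 1"
proof -
  have "PK t integrable_on {0..1}" by (intro integrable_continuous_real continuous_PK t)
  then have "(PK t has_integral 1) {0..1}" using integral_PK[OF t] integrable_integral by fastforce
  from nn_integral_has_integral_lebesgue'[OF _ this] PK_nonneg[OF t] show ?thesis by simp
qed

lemma weighted_core:
  fixes u w :: "complex \<Rightarrow> real" and t c :: real
  assumes cu: "continuous_on UNIV u" and u0: "\<And>z. u z \<ge> 0"
    and cw: "continuous_on UNIV w" and w0: "\<And>z. w z \<ge> 0" and wr: "\<And>z s. w (ee s * z) = w z"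
    and t: "0 \<le> t" "t < 1"
    and pt: "\<And>z. ennreal (u (of_real t * z))
               \<le> c * (\<integral>\<^sup>+ s. ennreal (PK t s * u (ee s * z)) * indicator {0..1} s \<partial>lborel)"
  shows "(\<integral>\<^sup>+ z. ennreal (u (of_real t * z) * w z) \<partial>lborel) \<le> c * (\<integral>\<^sup>+ z. ennreal (u z * w z) \<partial>lborel)"
proof -
  have [measurable]: "u \<in> borel_measurable borel" "w \<in> borel_measurable borel"
    using cu cw by (auto intro: borel_measurable_continuous_onI)
  have [measurable]: "PK t \<in> borel_measurable borel" "ee \<in> borel_measurable borel"
    by (auto intro: borel_measurable_continuous_onI continuous_PK[OF t] continuous_ee)
  have wr': "\<And>z s. w (z * ee s) = w z" using wr by (simp add: mult.commute)
  define G where "G = (\<lambda>(z, s). ennreal (PK t s * u (ee s * z) * w z) * indicator {0..1::real} s)"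
  have cont: "continuous_on UNIV (\<lambda>x::complex \<times> real. PK t (snd x) * u (ee (snd x) * fst x) * w (fst x))"
    by (intro continuous_intros continuous_on_compose2[OF continuous_PK[OF t, of UNIV]]
          continuous_on_compose2[OF continuous_ee[of UNIV]] continuous_on_compose2[OF cu] continuous_on_compose2[OF cw]) auto
  have Gm: "G \<in> borel_measurable (lborel \<Otimes>\<^sub>M lborel)"
  proof -
    have "(\<lambda>x::complex \<times> real. PK t (snd x) * u (ee (snd x) * fst x) * w (fst x)) \<in> borel_measurable (lborel \<Otimes>\<^sub>M lborel)"
      by (rule meas_pair[OF cont])
    moreover have "(\<lambda>x::complex \<times> real. indicator {0..1::real} (snd x) :: ennreal) \<in> borel_measurable (lborel \<Otimes>\<^sub>M lborel)"
      by measurable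
    ultimately show ?thesis unfolding G_def case_prod_unfold by measurable
  qed
  have "(\<integral>\<^sup>+ z. ennreal (u (of_real t * z) * w z) \<partial>lborel)
      \<le> (\<integral>\<^sup>+ z. (c * (\<integral>\<^sup>+ s. ennreal (PK t s * u (ee s * z)) * indicator {0..1} s \<partial>lborel)) * ennreal (w z) \<partial>lborel)"
  proof (rule nn_integral_mono)
    fix z :: complex
    have "ennreal (u (of_real t * z) * w z) = ennreal (u (of_real t * z)) * ennreal (w z)"
      using u0 w0 by (simp add: ennreal_mult)
    also have "\<dots> \<le> (c * (\<integral>\<^sup>+ s. ennreal (PK t s * u (ee s * z)) * indicator {0..1} s \<partial>lborel)) * ennreal (w z)"
      by (rule mult_right_mono[OF pt]) simp
    finally show "ennreal (u (of_real t * z) * w z) \<le> (c * (\<integral>\<^sup>+ s. ennreal (PK t s * u (ee s * z)) * indicator {0..1} s \<partial>lborel)) * ennreal (w z)" .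
  qed
  also have "\<dots> = (\<integral>\<^sup>+ z. c * (\<integral>\<^sup>+ s. G (z, s) \<partial>lborel) \<partial>lborel)"
  proof (rule nn_integral_cong)
    fix z :: complex
    have "(\<integral>\<^sup>+ s. ennreal (PK t s * u (ee s * z)) * indicator {0..1} s \<partial>lborel) * ennreal (w z)
        = (\<integral>\<^sup>+ s. ennreal (PK t s * u (ee s * z)) * indicator {0..1} s * ennreal (w z) \<partial>lborel)"
      by (rule nn_integral_multc[symmetric]) measurable
    also have "\<dots> = (\<integral>\<^sup>+ s. G (z, s) \<partial>lborel)"
      using PK_nonneg[OF t] u0 w0 by (intro nn_integral_cong) (simp add: G_def ennreal_mult mult_ac)
    finally show "(c * (\<integral>\<^sup>+ s. ennreal (PK t s * u (ee s * z)) * indicator {0..1} s \<partial>lborel)) * ennreal (w z)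
        = c * (\<integral>\<^sup>+ s. G (z, s) \<partial>lborel)" by (simp add: mult.assoc)
  qed
  also have "\<dots> = c * (\<integral>\<^sup>+ z. (\<integral>\<^sup>+ s. G (z, s) \<partial>lborel) \<partial>lborel)"
    by (rule nn_integral_cmult) (use Gm in \<open>simp add: lborel.borel_measurable_nn_integral\<close>)
  also have "(\<integral>\<^sup>+ z. (\<integral>\<^sup>+ s. G (z, s) \<partial>lborel) \<partial>lborel) = (\<integral>\<^sup>+ s. (\<integral>\<^sup>+ z. G (z, s) \<partial>lborel) \<partial>lborel)"
    using lborel_pair.Fubini'[of "\<lambda>z s. G (z, s)"] Gm by (simp add: case_prod_unfold)
  also have "\<dots> = (\<integral>\<^sup>+ s. ennreal (PK t s) * indicator {0..1} s * (\<integral>\<^sup>+ z. ennreal (u z * w z) \<partial>lborel) \<partial>lborel)"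
  proof (rule nn_integral_cong)
    fix s :: real
    have [measurable]: "(\<lambda>z. ennreal (u z * w z)) \<in> borel_measurable borel" by measurable
    have "(\<integral>\<^sup>+ z. G (z, s) \<partial>lborel) = (\<integral>\<^sup>+ z. ennreal (PK t s) * indicator {0..1} s * ennreal (u (ee s * z) * w (ee s * z)) \<partial>lborel)"
      using PK_nonneg[OF t] u0 w0 by (intro nn_integral_cong) (simp add: G_def wr wr' ennreal_mult mult_ac)
    also have "\<dots> = ennreal (PK t s) * indicator {0..1} s * (\<integral>\<^sup>+ z. ennreal (u (ee s * z) * w (ee s * z)) \<partial>lborel)"
      by (rule nn_integral_cmult) measurable
    also have "(\<integral>\<^sup>+ z. ennreal (u (ee s * z) * w (ee s * z)) \<partial>lborel) = (\<integral>\<^sup>+ z. ennreal (u z * w z) \<partial>lborel)"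
      using nn_integral_rotate[of "\<lambda>z. ennreal (u z * w z)" "ee s"] by simp
    finally show "(\<integral>\<^sup>+ z. G (z, s) \<partial>lborel) = ennreal (PK t s) * indicator {0..1} s * (\<integral>\<^sup>+ z. ennreal (u z * w z) \<partial>lborel)" .
  qed
  also have "\<dots> = (\<integral>\<^sup>+ s. ennreal (PK t s) * indicator {0..1} s \<partial>lborel) * (\<integral>\<^sup>+ z. ennreal (u z * w z) \<partial>lborel)"
    by (rule nn_integral_multc) measurable
  also have "\<dots> = (\<integral>\<^sup>+ z. ennreal (u z * w z) \<partial>lborel)" by (simp add: nn_integral_PK[OF t])
  finally show ?thesis .
qed



definition wt :: "real \<Rightarrow> real \<Rightarrow> real \<Rightarrow> complex \<Rightarrow> real" where
  "wt p \<alpha> m z = exp (- p * \<alpha> * norm z powr m)"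

lemma wt_pos: "wt p \<alpha> m z > 0" by (simp add: wt_def)

lemma wt_cont: "m > 0 \<Longrightarrow> continuous_on UNIV (wt p \<alpha> m)"
  unfolding wt_def by (intro continuous_intros continuous_on_powr') auto

lemma wt_rot: "wt p \<alpha> m (ee s * z) = wt p \<alpha> m z"
  by (simp add: wt_def norm_mult)

lemma cont_normpow:
  assumes "continuous_on UNIV f" "p \<ge> 1"
  shows "continuous_on UNIV (\<lambda>z. norm (f z) powr p)"
  by (intro continuous_on_powr' continuous_intros assms) (use assms in auto)

lemma weighted1:
  assumes holf: "f holomorphic_on UNIV" and p: "p \<ge> 1" and m: "m > 0" and t: "0 \<le> t" "t \<le> 1"
  shows "(\<integral>\<^sup>+ z. ennreal (norm (f (of_real t * z)) powr p * wt p \<alpha> m z) \<partial>lborel)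
      \<le> (\<integral>\<^sup>+ z. ennreal (norm (f z) powr p * wt p \<alpha> m z) \<partial>lborel)"
proof (cases "t = 1")
  case True then show ?thesis by simp
next
  case False
  then have t1: "t < 1" using t by simp
  have cf: "continuous_on UNIV f" using holf by (rule holomorphic_on_imp_continuous_on)
  have "(\<integral>\<^sup>+ z. ennreal (norm (f (of_real t * z)) powr p * wt p \<alpha> m z) \<partial>lborel)
      \<le> ennreal 1 * (\<integral>\<^sup>+ z. ennreal (norm (f z) powr p * wt p \<alpha> m z) \<partial>lborel)"
  proof (rule weighted_core[where u = "\<lambda>z. norm (f z) powr p"])
    show "continuous_on UNIV (\<lambda>z. norm (f z) powr p)" by (rule cont_normpow[OF cf p])
    show "continuous_on UNIV (wt p \<alpha> m)" by (rule wt_cont[OF m])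
    fix z :: complex
    have hg: "(\<lambda>\<zeta>. f (\<zeta> * z)) holomorphic_on UNIV"
      by (intro holomorphic_on_compose_gen[OF _ holf, unfolded o_def] holomorphic_intros) auto
    from poisson_ineq_nn[OF hg t(1) t1 p]
    show "ennreal (norm (f (of_real t * z)) powr p)
          \<le> ennreal 1 * (\<integral>\<^sup>+ s. ennreal (PK t s * norm (f (ee s * z)) powr p) * indicator {0..1} s \<partial>lborel)"
      by simp
  qed (use t t1 wt_pos wt_rot in \<open>auto simp: less_imp_le\<close>)
  then show ?thesis by simp
qed

lemma weighted0:
  assumes holf: "f holomorphic_on UNIV" and f0: "f 0 = 0" and p: "p \<ge> 1" and m: "m > 0" and t: "0 \<le> t" "t \<le> 1"
  shows "(\<integral>\<^sup>+ z. ennreal (norm (f (of_real t * z)) powr p * wt p \<alpha> m z) \<partial>lborel)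
      \<le> ennreal (t powr p) * (\<integral>\<^sup>+ z. ennreal (norm (f z) powr p * wt p \<alpha> m z) \<partial>lborel)"
proof (cases "t = 1")
  case True then show ?thesis by simp
next
  case False
  then have t1: "t < 1" using t by simp
  have cf: "continuous_on UNIV f" using holf by (rule holomorphic_on_imp_continuous_on)
  define q where "q = (\<lambda>z. if z = 0 then deriv f 0 else (f z - f 0) / (z - 0))"
  have hq: "q holomorphic_on UNIV" unfolding q_def by (rule pole_lemma[OF holf]) auto
  have fq: "f w = w * q w" for w
    using f0 by (cases "w = 0") (auto simp: q_def)
  show ?thesis
  proof (rule weighted_core[where u = "\<lambda>z. norm (f z) powr p"])
    show "continuous_on UNIV (\<lambda>z. norm (f z) powr p)" by (rule cont_normpow[OF cf p])
    show "continuous_on UNIV (wt p \<alpha> m)" by (rule wt_cont[OF m])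
    fix z :: complex
    define g where "g = (\<lambda>\<zeta>. z * q (\<zeta> * z))"
    have hg: "g holomorphic_on UNIV" unfolding g_def
      by (intro holomorphic_intros holomorphic_on_compose_gen[OF _ hq, unfolded o_def]) auto
    have e1: "norm (f (of_real t * z)) powr p = t powr p * norm (g (of_real t)) powr p"
    proof -
      have "f (of_real t * z) = of_real t * g (of_real t)"
        by (simp add: fq g_def mult_ac)
      then have "norm (f (of_real t * z)) = t * norm (g (of_real t))"
        using t by (simp add: norm_mult)
      then show ?thesis using t by (simp add: powr_mult)
    qed
    have e2: "norm (g (ee s)) = norm (f (ee s * z))" for s
      by (simp add: g_def fq norm_mult)
    have "ennreal (norm (f (of_real t * z)) powr p) = ennreal (t powr p) * ennreal (norm (g (of_real t)) powr p)"
      by (simp add: e1 ennreal_mult)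
    also have "\<dots> \<le> ennreal (t powr p) * (\<integral>\<^sup>+ s. ennreal (PK t s * norm (g (ee s)) powr p) * indicator {0..1} s \<partial>lborel)"
      by (rule mult_left_mono[OF poisson_ineq_nn[OF hg t(1) t1 p]]) simp
    finally show "ennreal (norm (f (of_real t * z)) powr p)
          \<le> ennreal (t powr p) * (\<integral>\<^sup>+ s. ennreal (PK t s * norm (f (ee s * z)) powr p) * indicator {0..1} s \<partial>lborel)"
      by (simp add: e2)
  qed (use t t1 wt_pos wt_rot in \<open>auto simp: less_imp_le\<close>)
qed



lemma hardy_eq:
  "hardy_op f z = integral {0..1} (\<lambda>t. f (of_real t * z))"
proof (cases "z = 0")
  case True then show ?thesis by (simp add: hardy_op_def)
next
  case False
  have lp: "linepath 0 z x = of_real x * z" for x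
    by (simp add: linepath_def scaleR_conv_of_real)
  have "hardy_op f z = contour_integral (linepath 0 z) f / z" using False by (simp add: hardy_op_def)
  also have "\<dots> = integral {0..1} (\<lambda>x. f (of_real x * z) * z) / z"
    by (simp only: contour_integral_integral lp vector_derivative_linepath_at diff_zero)
  also have "\<dots> = integral {0..1} (\<lambda>x. f (of_real x * z))"
    using False by simp
  finally show ?thesis .
qed

lemma cont_scaled:
  fixes f :: "complex \<Rightarrow> complex" and z :: complex
  assumes "continuous_on UNIV f"
  shows "continuous_on {0..1} (\<lambda>t::real. f (of_real t * z))"
  by (intro continuous_on_compose2[OF assms] continuous_intros) auto

lemma integrable_scaled:
  fixes f :: "complex \<Rightarrow> complex" and z :: complex
  assumes "continuous_on UNIV f"
  shows "(\<lambda>t::real. f (of_real t * z)) integrable_on {0..1}"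
  by (intro integrable_continuous_real cont_scaled assms)

lemma hardy_linear:
  assumes "continuous_on UNIV f" "continuous_on UNIV g"
  shows "hardy_op (\<lambda>z. a * f z + b * g z) = (\<lambda>z. a * hardy_op f z + b * hardy_op g z)"
proof
  fix z
  have "integral {0..1} (\<lambda>t. a * f (of_real t * z) + b * g (of_real t * z))
      = integral {0..1} (\<lambda>t. a * f (of_real t * z)) + integral {0..1} (\<lambda>t. b * g (of_real t * z))"
    by (rule integral_add) (auto intro: integrable_on_cmult_left integrable_scaled assms
        simp: integrable_on_mult_right integrable_scaled[OF assms(1)] integrable_scaled[OF assms(2)])
  then show "hardy_op (\<lambda>z. a * f z + b * g z) z = a * hardy_op f z + b * hardy_op g z"
    by (simp add: hardy_eq)
qed

lemma hardy_const: "hardy_op (\<lambda>_. c) = (\<lambda>_. c)"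
  by (simp add: hardy_eq fun_eq_iff)

lemma hardy_plus_const:
  assumes "continuous_on UNIV f"
  shows "hardy_op (\<lambda>z. f z + c) = (\<lambda>z. hardy_op f z + c)"
  using hardy_linear[OF assms continuous_on_const[of UNIV c], of 1 1] by (simp add: hardy_const)

lemma hardy_zero: "hardy_op f 0 = f 0"
  by (simp add: hardy_op_def)

lemma hardy_holo:
  assumes holf: "f holomorphic_on UNIV"
  shows "hardy_op f holomorphic_on UNIV"
proof -
  define F where "F = (\<lambda>x. contour_integral (linepath 0 x) f)"
  have cf: "continuous_on UNIV f" using holf by (rule holomorphic_on_imp_continuous_on)
  have dF: "(F has_field_derivative f x) (at x)" for x
  proof -
    have "((\<lambda>x. contour_integral (linepath 0 x) f) has_field_derivative f x) (at x within UNIV)"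
    proof (rule triangle_contour_integrals_convex_primitive[OF cf])
      fix b c :: complex
      have "(f has_contour_integral 0) (linepath 0 b +++ linepath b c +++ linepath c 0)"
        by (rule Cauchy_theorem_triangle) (use holf in \<open>auto intro: holomorphic_on_subset\<close>)
      then show "contour_integral (linepath 0 b) f + contour_integral (linepath b c) f + contour_integral (linepath c 0) f = 0"
        by (rule has_chain_integral_chain_integral3)
    qed auto
    then show ?thesis by (simp add: F_def)
  qed
  have hF: "F holomorphic_on UNIV"
    using dF by (auto simp: holomorphic_on_def field_differentiable_def)
  have "(\<lambda>z. if z = 0 then deriv F 0 else (F z - F 0) / (z - 0)) holomorphic_on UNIV"
    by (rule pole_lemma[OF hF]) auto
  moreover have "(\<lambda>z. if z = 0 then deriv F 0 else (F z - F 0) / (z - 0)) = hardy_op f"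
  proof
    fix z
    have "deriv F 0 = f 0" using dF[of 0] by (rule DERIV_imp_deriv)
    then show "(if z = 0 then deriv F 0 else (F z - F 0) / (z - 0)) = hardy_op f z"
      by (simp add: hardy_op_def F_def)
  qed
  ultimately show ?thesis by simp
qed

lemma hardy_pointwise:
  assumes cf: "continuous_on UNIV f" and p: "p \<ge> 1"
  shows "ennreal (norm (hardy_op f z) powr p)
      \<le> (\<integral>\<^sup>+ t. ennreal (norm (f (of_real t * z)) powr p) * indicator {0..1} t \<partial>lborel)"
proof -
  have cn: "continuous_on {0..1} (\<lambda>t::real. norm (f (of_real t * z)))"
    by (intro continuous_intros cont_scaled cf)
  have cnp: "continuous_on {0..1} (\<lambda>t::real. norm (f (of_real t * z)) powr p)"
    by (intro continuous_on_powr' continuous_intros cont_scaled cf) (use p in auto)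
  have "norm (hardy_op f z) \<le> integral {0..1} (\<lambda>t. norm (f (of_real t * z)))"
    unfolding hardy_eq
    by (rule integral_norm_bound_integral) (auto intro: integrable_scaled cf integrable_continuous_real cn)
  then have "norm (hardy_op f z) powr p \<le> (integral {0..1} (\<lambda>t. 1 * norm (f (of_real t * z)))) powr p"
    using p by (intro powr_mono2) auto
  also have "\<dots> \<le> integral {0..1} (\<lambda>t. 1 * norm (f (of_real t * z)) powr p)"
    by (rule power_jensen[OF p _ cn]) auto
  finally have le: "norm (hardy_op f z) powr p \<le> integral {0..1} (\<lambda>t. norm (f (of_real t * z)) powr p)" by simp
  have "((\<lambda>t. norm (f (of_real t * z)) powr p) has_integral integral {0..1} (\<lambda>t. norm (f (of_real t * z)) powr p)) {0..1}"
    by (rule integrable_integral) (rule integrable_continuous_real[OF cnp])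
  from nn_integral_has_integral_lebesgue'[OF _ this]
  have "(\<integral>\<^sup>+ t. ennreal (norm (f (of_real t * z)) powr p) * indicator {0..1} t \<partial>lborel)
        = ennreal (integral {0..1} (\<lambda>t. norm (f (of_real t * z)) powr p))" by simp
  then show ?thesis using le by (simp add: ennreal_leI)
qed

lemma hardy_general:
  fixes K :: "real \<Rightarrow> ennreal"
  assumes holf: "f holomorphic_on UNIV" and p: "p \<ge> 1" and m: "m > 0"
    and Km[measurable]: "K \<in> borel_measurable borel"
    and W: "\<And>t. 0 \<le> t \<Longrightarrow> t \<le> 1 \<Longrightarrow>
      (\<integral>\<^sup>+ z. ennreal (norm (f (of_real t * z)) powr p * wt p \<alpha> m z) \<partial>lborel)
        \<le> K t * (\<integral>\<^sup>+ z. ennreal (norm (f z) powr p * wt p \<alpha> m z) \<partial>lborel)"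
  shows "(\<integral>\<^sup>+ z. ennreal (norm (hardy_op f z) powr p * wt p \<alpha> m z) \<partial>lborel)
      \<le> (\<integral>\<^sup>+ t. K t * indicator {0..1} t \<partial>lborel) * (\<integral>\<^sup>+ z. ennreal (norm (f z) powr p * wt p \<alpha> m z) \<partial>lborel)"
proof -
  let ?N = "(\<integral>\<^sup>+ z. ennreal (norm (f z) powr p * wt p \<alpha> m z) \<partial>lborel)"
  have cf: "continuous_on UNIV f" using holf by (rule holomorphic_on_imp_continuous_on)
  have cw: "continuous_on UNIV (wt p \<alpha> m)" by (rule wt_cont[OF m])
  define H where "H = (\<lambda>(z, t). ennreal (norm (f (of_real t * z)) powr p * wt p \<alpha> m z) * indicator {0..1::real} t)"
  have cont: "continuous_on UNIV (\<lambda>x::complex \<times> real. norm (f (of_real (snd x) * fst x)) powr p * wt p \<alpha> m (fst x))"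
    by (intro continuous_intros continuous_on_powr' continuous_on_compose2[OF cf] continuous_on_compose2[OF cw])
       (use p in auto)
  have Hm: "H \<in> borel_measurable (lborel \<Otimes>\<^sub>M lborel)"
  proof -
    have "(\<lambda>x::complex \<times> real. norm (f (of_real (snd x) * fst x)) powr p * wt p \<alpha> m (fst x)) \<in> borel_measurable (lborel \<Otimes>\<^sub>M lborel)"
      by (rule meas_pair[OF cont])
    then show ?thesis unfolding H_def case_prod_unfold by measurable
  qed
  have "(\<integral>\<^sup>+ z. ennreal (norm (hardy_op f z) powr p * wt p \<alpha> m z) \<partial>lborel)
      \<le> (\<integral>\<^sup>+ z. (\<integral>\<^sup>+ t. H (z, t) \<partial>lborel) \<partial>lborel)"
  proof (rule nn_integral_mono)
    fix z :: complex
    have [measurable]: "(\<lambda>t::real. ennreal (norm (f (of_real t * z)) powr p)) \<in> borel_measurable borel"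
      by (intro measurable_compose[OF _ measurable_ennreal] borel_measurable_continuous_onI
            continuous_on_powr' continuous_intros continuous_on_compose2[OF cf]) (use p in auto)
    have "ennreal (norm (hardy_op f z) powr p * wt p \<alpha> m z) = ennreal (norm (hardy_op f z) powr p) * ennreal (wt p \<alpha> m z)"
      using wt_pos[of p \<alpha> m z] by (simp add: ennreal_mult)
    also have "\<dots> \<le> (\<integral>\<^sup>+ t. ennreal (norm (f (of_real t * z)) powr p) * indicator {0..1} t \<partial>lborel) * ennreal (wt p \<alpha> m z)"
      by (rule mult_right_mono[OF hardy_pointwise[OF cf p]]) simp
    also have "\<dots> = (\<integral>\<^sup>+ t. ennreal (norm (f (of_real t * z)) powr p) * indicator {0..1} t * ennreal (wt p \<alpha> m z) \<partial>lborel)"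
      by (rule nn_integral_multc[symmetric]) measurable
    also have "\<dots> = (\<integral>\<^sup>+ t. H (z, t) \<partial>lborel)"
      using wt_pos[of p \<alpha> m z] by (intro nn_integral_cong) (simp add: H_def ennreal_mult mult_ac)
    finally show "ennreal (norm (hardy_op f z) powr p * wt p \<alpha> m z) \<le> (\<integral>\<^sup>+ t. H (z, t) \<partial>lborel)" .
  qed
  also have "\<dots> = (\<integral>\<^sup>+ t. (\<integral>\<^sup>+ z. H (z, t) \<partial>lborel) \<partial>lborel)"
    using lborel_pair.Fubini'[of "\<lambda>z t. H (z, t)"] Hm by (simp add: case_prod_unfold)
  also have "\<dots> \<le> (\<integral>\<^sup>+ t. K t * indicator {0..1} t * ?N \<partial>lborel)"
  proof (rule nn_integral_mono)
    fix t :: real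
    show "(\<integral>\<^sup>+ z. H (z, t) \<partial>lborel) \<le> K t * indicator {0..1} t * ?N"
    proof (cases "t \<in> {0..1}")
      case True
      have "(\<integral>\<^sup>+ z. H (z, t) \<partial>lborel) = (\<integral>\<^sup>+ z. ennreal (norm (f (of_real t * z)) powr p * wt p \<alpha> m z) \<partial>lborel)"
        using True by (intro nn_integral_cong) (simp add: H_def)
      also have "\<dots> \<le> K t * ?N" using W True by auto
      finally show ?thesis using True by simp
    next
      case False then show ?thesis by (simp add: H_def)
    qed
  qed
  also have "\<dots> = (\<integral>\<^sup>+ t. K t * indicator {0..1} t \<partial>lborel) * ?N"
    by (rule nn_integral_multc) measurable
  finally show ?thesis .
qed

lemma hardy_bound1:
  assumes holf: "f holomorphic_on UNIV" and p: "p \<ge> 1" and m: "m > 0"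
  shows "(\<integral>\<^sup>+ z. ennreal (norm (hardy_op f z) powr p * wt p \<alpha> m z) \<partial>lborel)
      \<le> (\<integral>\<^sup>+ z. ennreal (norm (f z) powr p * wt p \<alpha> m z) \<partial>lborel)"
proof -
  have "(\<integral>\<^sup>+ z. ennreal (norm (hardy_op f z) powr p * wt p \<alpha> m z) \<partial>lborel)
      \<le> (\<integral>\<^sup>+ t. 1 * indicator {0..1::real} t \<partial>lborel) * (\<integral>\<^sup>+ z. ennreal (norm (f z) powr p * wt p \<alpha> m z) \<partial>lborel)"
  proof (rule hardy_general[where K="\<lambda>_. 1", OF holf p m])
    fix t :: real assume "0 \<le> t" "t \<le> 1"
    then show "(\<integral>\<^sup>+ z. ennreal (norm (f (of_real t * z)) powr p * wt p \<alpha> m z) \<partial>lborel)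
        \<le> 1 * (\<integral>\<^sup>+ z. ennreal (norm (f z) powr p * wt p \<alpha> m z) \<partial>lborel)"
      using weighted1[OF holf p m] by simp
  qed simp
  then show ?thesis by simp
qed

lemma hardy_bound0:
  assumes holf: "f holomorphic_on UNIV" and f0: "f 0 = 0" and p: "p \<ge> 1" and m: "m > 0"
  shows "(\<integral>\<^sup>+ z. ennreal (norm (hardy_op f z) powr p * wt p \<alpha> m z) \<partial>lborel)
      \<le> ennreal (1/2) * (\<integral>\<^sup>+ z. ennreal (norm (f z) powr p * wt p \<alpha> m z) \<partial>lborel)"
proof -
  have "(\<integral>\<^sup>+ z. ennreal (norm (hardy_op f z) powr p * wt p \<alpha> m z) \<partial>lborel)
      \<le> (\<integral>\<^sup>+ t. ennreal (t powr p) * indicator {0..1} t \<partial>lborel) * (\<integral>\<^sup>+ z. ennreal (norm (f z) powr p * wt p \<alpha> m z) \<partial>lborel)"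
  proof (rule hardy_general[where K="\<lambda>t. ennreal (t powr p)", OF holf p m])
    fix t :: real assume "0 \<le> t" "t \<le> 1"
    then show "(\<integral>\<^sup>+ z. ennreal (norm (f (of_real t * z)) powr p * wt p \<alpha> m z) \<partial>lborel)
        \<le> ennreal (t powr p) * (\<integral>\<^sup>+ z. ennreal (norm (f z) powr p * wt p \<alpha> m z) \<partial>lborel)"
      using weighted0[OF holf f0 p m] by simp
  qed measurable
  also have "(\<integral>\<^sup>+ t. ennreal (t powr p) * indicator {0..1} t \<partial>lborel) \<le> (\<integral>\<^sup>+ t. ennreal (t powr 1) * indicator {0..1} t \<partial>lborel)"
  proof (rule nn_integral_mono)
    fix t :: real
    show "ennreal (t powr p) * indicator {0..1} t \<le> ennreal (t powr 1) * indicator {0..1} t"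
    proof (cases "t \<in> {0..1}")
      case True
      then have "t powr p \<le> t powr 1" using p by (intro powr_mono') auto
      then show ?thesis using True by (simp add: ennreal_leI)
    qed simp
  qed
  also have "(\<integral>\<^sup>+ t. ennreal (t powr 1) * indicator {0..1} t \<partial>lborel) = ennreal (1/2)"
  proof -
    have "((\<lambda>x::real. x powr 1) has_integral (1 powr (1+1) / (1+1))) {0..1}"
      by (rule has_integral_powr_from_0) auto
    then have "((\<lambda>x::real. x powr 1) has_integral (1/2)) {0..1}" by simp
    from nn_integral_has_integral_lebesgue'[OF _ this] show ?thesis by simp
  qed
  finally show ?thesis by (simp add: mult_right_mono)
qed



definition NN :: "real \<Rightarrow> real \<Rightarrow> real \<Rightarrow> (complex \<Rightarrow> complex) \<Rightarrow> ennreal" where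
  "NN p \<alpha> m f = (\<integral>\<^sup>+ z. ennreal (norm (f z) powr p * wt p \<alpha> m z) \<partial>lborel)"

definition WW :: "real \<Rightarrow> real \<Rightarrow> real \<Rightarrow> ennreal" where
  "WW p \<alpha> m = (\<integral>\<^sup>+ z. ennreal (wt p \<alpha> m z) \<partial>lborel)"

lemma fi_eq: "fock_integrand p \<alpha> m f = (\<lambda>z. norm (f z) powr p * wt p \<alpha> m z)"
  by (simp add: fun_eq_iff fock_integrand_def wt_def)

lemma fi_meas:
  assumes "continuous_on UNIV f" "p \<ge> 1" "m > 0"
  shows "fock_integrand p \<alpha> m f \<in> borel_measurable lborel"
proof -
  have "continuous_on UNIV (\<lambda>z. norm (f z) powr p * wt p \<alpha> m z)"
    by (intro continuous_intros cont_normpow wt_cont assms)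
  then have "(\<lambda>z. norm (f z) powr p * wt p \<alpha> m z) \<in> borel_measurable borel"
    by (rule borel_measurable_continuous_onI)
  then show ?thesis by (simp add: fi_eq measurable_lborel1)
qed

lemma space_iff:
  assumes holf: "f holomorphic_on UNIV" and p: "p \<ge> 1" and m: "m > 0"
  shows "f \<in> fock_space p \<alpha> m \<longleftrightarrow> NN p \<alpha> m f < \<infinity>"
proof -
  have cf: "continuous_on UNIV f" using holf by (rule holomorphic_on_imp_continuous_on)
  have "(\<integral>\<^sup>+ z. ennreal (norm (fock_integrand p \<alpha> m f z)) \<partial>lborel) = NN p \<alpha> m f"
    unfolding NN_def fi_eq using wt_pos by (intro nn_integral_cong) (simp add: less_imp_le)
  then show ?thesis
    using fi_meas[OF cf p m] holf by (simp add: fock_space_def integrable_iff_bounded)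
qed

lemma norm_eq:
  assumes cf: "continuous_on UNIV f" and p: "p \<ge> 1" and m: "m > 0"
  shows "fock_norm p \<alpha> m f = enn2real (NN p \<alpha> m f) powr (1 / p)"
proof -
  have "integral\<^sup>L lborel (fock_integrand p \<alpha> m f) = enn2real (\<integral>\<^sup>+ z. ennreal (fock_integrand p \<alpha> m f z) \<partial>lborel)"
    by (rule integral_eq_nn_integral[OF fi_meas[OF cf p m]]) (simp add: fi_eq wt_pos less_imp_le)
  then show ?thesis by (simp add: fock_norm_def NN_def fi_eq)
qed

lemma norm_le:
  assumes cf: "continuous_on UNIV f" and cg: "continuous_on UNIV g" and p: "p \<ge> 1" and m: "m > 0"
    and le: "NN p \<alpha> m g \<le> ennreal K * NN p \<alpha> m f" and fin: "NN p \<alpha> m f < \<infinity>" and K: "K \<ge> 0"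
  shows "fock_norm p \<alpha> m g \<le> K powr (1 / p) * fock_norm p \<alpha> m f"
proof -
  have "enn2real (NN p \<alpha> m g) \<le> enn2real (ennreal K * NN p \<alpha> m f)"
    by (rule enn2real_mono[OF le]) (use fin in \<open>simp add: ennreal_mult_less_top\<close>)
  also have "\<dots> = K * enn2real (NN p \<alpha> m f)" using K by (simp add: enn2real_mult)
  finally have "enn2real (NN p \<alpha> m g) powr (1 / p) \<le> (K * enn2real (NN p \<alpha> m f)) powr (1 / p)"
    using p by (intro powr_mono2) auto
  also have "\<dots> = K powr (1 / p) * enn2real (NN p \<alpha> m f) powr (1 / p)"
    using K by (simp add: powr_mult)
  finally show ?thesis by (simp add: norm_eq[OF cf p m] norm_eq[OF cg p m])
qed

lemma WW_finite:
  assumes "p \<ge> 1" "\<alpha> > 0" "m > 0"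
  shows "WW p \<alpha> m < \<infinity>"
proof -
  have "WW p \<alpha> m = (\<integral>\<^sup>+ z. ennreal (exp (- (p * \<alpha>) * norm (z::complex) powr m)) \<partial>lborel)"
    unfolding WW_def wt_def by simp
  also have "\<dots> < \<infinity>" by (rule nn_integral_exp_finite) (use assms in auto)
  finally show ?thesis .
qed

lemma WW_pos:
  assumes "m > 0"
  shows "WW p \<alpha> m > 0"
proof (rule ccontr)
  assume "\<not> WW p \<alpha> m > 0"
  then have "WW p \<alpha> m = 0" by simp
  moreover have "(\<lambda>z. ennreal (wt p \<alpha> m z)) \<in> borel_measurable lborel"
    using borel_measurable_continuous_onI[OF wt_cont[OF assms]] by (simp add: measurable_lborel1)
  ultimately have "AE z in lborel. ennreal (wt p \<alpha> m z) = 0"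
    unfolding WW_def by (simp add: nn_integral_0_iff_AE)
  then have "AE z in (lborel :: complex measure). False"
  proof (rule AE_mp)
    show "AE z in lborel. ennreal (wt p \<alpha> m z) = 0 \<longrightarrow> False"
      using wt_pos by (intro AE_I2) (simp add: ennreal_eq_0_iff not_le)
  qed
  then have "ae_filter (lborel :: complex measure) = bot" using trivial_limit_def by blast
  then show False by (simp add: ae_filter_eq_bot_iff)
qed

lemma NN_const:
  assumes m: "m > 0"
  shows "NN p \<alpha> m (\<lambda>_. c) = ennreal (norm c powr p) * WW p \<alpha> m"
proof -
  have [measurable]: "wt p \<alpha> m \<in> borel_measurable borel"
    by (rule borel_measurable_continuous_onI[OF wt_cont[OF m]])
  have "NN p \<alpha> m (\<lambda>_. c) = (\<integral>\<^sup>+ z. ennreal (norm c powr p) * ennreal (wt p \<alpha> m z) \<partial>lborel)"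
    unfolding NN_def using wt_pos by (intro nn_integral_cong) (simp add: ennreal_mult less_imp_le)
  also have "\<dots> = ennreal (norm c powr p) * WW p \<alpha> m"
    unfolding WW_def
    by (rule nn_integral_cmult) measurable
  finally show ?thesis .
qed



lemma finite_jensen:
  fixes x :: "'i \<Rightarrow> real"
  assumes fin: "finite I" and ne: "I \<noteq> {}" and x0: "\<And>i. i \<in> I \<Longrightarrow> x i \<ge> 0" and p: "p \<ge> 1"
  shows "(sum x I / card I) powr p \<le> (\<Sum>i\<in>I. x i powr p) / card I"
proof -
  define c where "c = real (card I)"
  have c0: "c > 0" using fin ne by (simp add: c_def card_gt_0_iff)
  define A where "A = sum x I / c"
  have A0: "A \<ge> 0" using x0 c0 by (simp add: A_def sum_nonneg)
  have "(\<Sum>i\<in>I. p * A powr (p - 1) * x i) \<le> (\<Sum>i\<in>I. x i powr p + (p - 1) * A powr p)"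
    by (rule sum_mono) (use tangent_powr[OF A0 _ p] x0 in auto)
  also have "(\<Sum>i\<in>I. x i powr p + (p - 1) * A powr p) = (\<Sum>i\<in>I. x i powr p) + c * ((p - 1) * A powr p)"
    by (simp add: sum.distrib c_def)
  also have "(\<Sum>i\<in>I. p * A powr (p - 1) * x i) = p * A powr (p - 1) * (c * A)"
    using c0 by (simp add: sum_distrib_left[symmetric] A_def)
  finally have ineq: "p * A powr (p - 1) * (c * A) \<le> (\<Sum>i\<in>I. x i powr p) + c * ((p - 1) * A powr p)" .
  show ?thesis
  proof (cases "A = 0")
    case True
    have "0 \<le> (\<Sum>i\<in>I. x i powr p) / card I" by (simp add: sum_nonneg)
    moreover have s0: "sum x I / real (card I) = 0" using True by (simp add: A_def c_def)
    ultimately show ?thesis by (simp only: s0) simp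
  next
    case False
    then have Apos: "A > 0" using A0 by simp
    have "A powr (p - 1) * A = A powr p" using Apos by (simp add: powr_diff)
    then have e1: "p * A powr (p - 1) * (c * A) = c * p * A powr p"
      by (metis mult.assoc mult.commute)
    have e2: "c * ((p - 1) * A powr p) = c * p * A powr p - c * A powr p" by (simp add: algebra_simps)
    have "c * A powr p \<le> (\<Sum>i\<in>I. x i powr p)" using ineq e1 e2 by linarith
    then have "A powr p \<le> (\<Sum>i\<in>I. x i powr p) / c" using c0 by (simp add: field_simps)
    then show ?thesis by (simp add: A_def c_def)
  qed
qed

lemma geom_half: "(\<Sum>k\<in>{1..n}. (1/2::real)^k) \<le> 1"
proof -
  have "(\<Sum>k\<in>{1..n}. (1/2::real)^k) = 1 - (1/2)^n"
    by (induction n) (auto simp: power_Suc)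
  then show ?thesis by simp
qed

lemma powr_sum_bound:
  fixes a b p :: real
  assumes "a \<ge> 0" "b \<ge> 0" "p \<ge> 1"
  shows "(a + b) powr p \<le> 2 powr p * (a powr p + b powr p)"
proof -
  have "(a + b) powr p \<le> (2 * max a b) powr p"
    by (rule powr_mono2) (use assms in auto)
  also have "\<dots> = 2 powr p * max a b powr p" using assms by (simp add: powr_mult)
  also have "max a b powr p \<le> a powr p + b powr p"
    using assms by (auto simp: max_def)
  then have "2 powr p * max a b powr p \<le> 2 powr p * (a powr p + b powr p)" by simp
  finally show ?thesis .
qed

context
  fixes p \<alpha> m :: real
  assumes p: "1 \<le> p" and a: "0 < \<alpha>" and m: "0 < m"
begin

lemma holo_cont: "f holomorphic_on UNIV \<Longrightarrow> continuous_on UNIV f"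
  by (rule holomorphic_on_imp_continuous_on)

lemma f0_bound:
  assumes holf: "f holomorphic_on UNIV"
  shows "ennreal (norm (f 0) powr p) * WW p \<alpha> m \<le> NN p \<alpha> m f"
proof -
  have "NN p \<alpha> m (\<lambda>_. f 0) = (\<integral>\<^sup>+ z. ennreal (norm (f (of_real 0 * z)) powr p * wt p \<alpha> m z) \<partial>lborel)"
    by (simp add: NN_def)
  also have "\<dots> \<le> NN p \<alpha> m f" unfolding NN_def by (rule weighted1[OF holf p m]) auto
  finally show ?thesis by (simp add: NN_const[OF m])
qed

lemma const_space: "(\<lambda>_. c) \<in> fock_space p \<alpha> m"
proof -
  have "WW p \<alpha> m < top" using WW_finite[OF p a m] by (simp add: infinity_ennreal_def)
  then show ?thesis
    by (subst space_iff[OF _ p m]) (auto simp: NN_const[OF m] ennreal_mult_less_top infinity_ennreal_def)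
qed

lemma space_holo: "f \<in> fock_space p \<alpha> m \<Longrightarrow> f holomorphic_on UNIV"
  by (simp add: fock_space_def)

lemma space_fin: "f \<in> fock_space p \<alpha> m \<Longrightarrow> NN p \<alpha> m f < \<infinity>"
  using space_iff[OF space_holo p m] by blast

lemma H_space:
  assumes "f \<in> fock_space p \<alpha> m"
  shows "hardy_op f \<in> fock_space p \<alpha> m" "NN p \<alpha> m (hardy_op f) \<le> NN p \<alpha> m f"
proof -
  have holf: "f holomorphic_on UNIV" using assms by (rule space_holo)
  show le: "NN p \<alpha> m (hardy_op f) \<le> NN p \<alpha> m f"
    unfolding NN_def by (rule hardy_bound1[OF holf p m])
  show "hardy_op f \<in> fock_space p \<alpha> m"
    using space_iff[OF hardy_holo[OF holf] p m] le space_fin[OF assms] by auto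
qed

lemma norm_le1:
  assumes "f \<in> fock_space p \<alpha> m" "g holomorphic_on UNIV" "NN p \<alpha> m g \<le> NN p \<alpha> m f"
  shows "fock_norm p \<alpha> m g \<le> fock_norm p \<alpha> m f"
  using norm_le[OF holo_cont[OF space_holo[OF assms(1)]] holo_cont[OF assms(2)] p m, where K=1] assms space_fin[OF assms(1)]
  by simp

lemma H_bounded: "fock_bounded_op p \<alpha> m hardy_op"
  unfolding fock_bounded_op_def
proof (intro conjI ballI allI exI)
  fix f assume f: "f \<in> fock_space p \<alpha> m"
  show "hardy_op f \<in> fock_space p \<alpha> m" by (rule H_space(1)[OF f])
  show "fock_norm p \<alpha> m (hardy_op f) \<le> 1 * fock_norm p \<alpha> m f"
    using norm_le1[OF f hardy_holo[OF space_holo[OF f]] H_space(2)[OF f]] by simp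
next
  fix f g a b assume "f \<in> fock_space p \<alpha> m" "g \<in> fock_space p \<alpha> m"
  then show "hardy_op (\<lambda>z. a * f z + b * g z) = (\<lambda>z. a * hardy_op f z + b * hardy_op g z)"
    by (intro hardy_linear holo_cont space_holo)
qed

lemma one_norm_pos: "fock_norm p \<alpha> m (\<lambda>_. 1) > 0"
proof -
  have "fock_norm p \<alpha> m (\<lambda>_. 1) = enn2real (WW p \<alpha> m) powr (1 / p)"
    by (simp add: norm_eq[OF _ p m] NN_const[OF m])
  moreover have "enn2real (WW p \<alpha> m) > 0"
    using WW_pos[OF m, of p \<alpha>] WW_finite[OF p a m] by (simp add: enn2real_positive_iff)
  ultimately show ?thesis by simp
qed

lemma opnorm_H: "fock_opnorm p \<alpha> m hardy_op = 1"
  unfolding fock_opnorm_def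
proof (rule cInf_eq_minimum)
  show "1 \<in> {C. 0 \<le> C \<and> (\<forall>f\<in>fock_space p \<alpha> m. fock_norm p \<alpha> m (hardy_op f) \<le> C * fock_norm p \<alpha> m f)}"
    using norm_le1 H_space hardy_holo space_holo by auto
  fix C assume "C \<in> {C. 0 \<le> C \<and> (\<forall>f\<in>fock_space p \<alpha> m. fock_norm p \<alpha> m (hardy_op f) \<le> C * fock_norm p \<alpha> m f)}"
  then have "fock_norm p \<alpha> m (hardy_op (\<lambda>_. 1)) \<le> C * fock_norm p \<alpha> m (\<lambda>_. 1)"
    using const_space by blast
  then have "1 * fock_norm p \<alpha> m (\<lambda>_. 1) \<le> C * fock_norm p \<alpha> m (\<lambda>_. 1)" by (simp add: hardy_const)
  then show "1 \<le> C" using one_norm_pos by (rule mult_right_le_imp_le)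
qed

lemma Hpow_holo: "f holomorphic_on UNIV \<Longrightarrow> (hardy_op ^^ n) f holomorphic_on UNIV"
  by (induction n) (auto intro: hardy_holo)

lemma Hpow_space:
  assumes "f \<in> fock_space p \<alpha> m"
  shows "(hardy_op ^^ n) f \<in> fock_space p \<alpha> m \<and> NN p \<alpha> m ((hardy_op ^^ n) f) \<le> NN p \<alpha> m f"
proof (induction n)
  case 0 then show ?case using assms by simp
next
  case (Suc n)
  then show ?case using H_space[of "(hardy_op ^^ n) f"] by (auto intro: order.trans)
qed

lemma opnorm_Hpow: "fock_opnorm p \<alpha> m (hardy_op ^^ n) \<le> 1"
  unfolding fock_opnorm_def
proof (rule cInf_lower)
  show "1 \<in> {C. 0 \<le> C \<and> (\<forall>f\<in>fock_space p \<alpha> m. fock_norm p \<alpha> m ((hardy_op ^^ n) f) \<le> C * fock_norm p \<alpha> m f)}"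
    using Hpow_space norm_le1 Hpow_holo space_holo by auto
  show "bdd_below {C. 0 \<le> C \<and> (\<forall>f\<in>fock_space p \<alpha> m. fock_norm p \<alpha> m ((hardy_op ^^ n) f) \<le> C * fock_norm p \<alpha> m f)}"
    by (rule bdd_belowI[of _ 0]) auto
qed

lemma H_power_bounded: "power_bounded p \<alpha> m hardy_op"
  unfolding power_bounded_def
  using H_bounded opnorm_Hpow by (auto intro!: bdd_aboveI[of _ 1])

end



lemma Hpow_zero: "(hardy_op ^^ k) g 0 = g 0"
  by (induction k) (auto simp: hardy_zero)

context
  fixes p \<alpha> m :: real
  assumes p: "1 \<le> p" and a: "0 < \<alpha>" and m: "0 < m"
begin

lemma meas_NN:
  fixes f :: "complex \<Rightarrow> complex"
  assumes "continuous_on UNIV f"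
  shows "(\<lambda>z. ennreal (norm (f z) powr p * wt p \<alpha> m z)) \<in> borel_measurable lborel"
proof -
  have "(\<lambda>z. norm (f z) powr p * wt p \<alpha> m z) \<in> borel_measurable lborel"
    using fi_meas[OF assms p m, of \<alpha>] by (simp add: fi_eq)
  then show ?thesis by measurable
qed

lemma Hpow_shift:
  assumes holf: "f holomorphic_on UNIV"
  shows "(hardy_op ^^ k) f = (\<lambda>z. (hardy_op ^^ k) (\<lambda>z. f z - f 0) z + f 0)"
proof (induction k)
  case 0 then show ?case by simp
next
  case (Suc k)
  have holg: "(\<lambda>z. f z - f 0) holomorphic_on UNIV" using holf by (intro holomorphic_intros)
  have "(hardy_op ^^ Suc k) f = hardy_op ((hardy_op ^^ k) f)" by simp
  also have "\<dots> = hardy_op (\<lambda>z. (hardy_op ^^ k) (\<lambda>z. f z - f 0) z + f 0)" by (simp only: Suc)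
  also have "\<dots> = (\<lambda>z. hardy_op ((hardy_op ^^ k) (\<lambda>z. f z - f 0)) z + f 0)"
    by (rule hardy_plus_const[OF holo_cont[OF p a m Hpow_holo[OF p a m holg]]])
  finally show ?case by simp
qed

lemma Hpow_bound0:
  assumes holg: "g holomorphic_on UNIV" and g0: "g 0 = 0"
  shows "NN p \<alpha> m ((hardy_op ^^ k) g) \<le> ennreal ((1/2)^k) * NN p \<alpha> m g"
proof (induction k)
  case 0 then show ?case by simp
next
  case (Suc k)
  have hk: "(hardy_op ^^ k) g holomorphic_on UNIV" by (rule Hpow_holo[OF p a m holg])
  have "NN p \<alpha> m ((hardy_op ^^ Suc k) g) = NN p \<alpha> m (hardy_op ((hardy_op ^^ k) g))" by simp
  also have "\<dots> \<le> ennreal (1/2) * NN p \<alpha> m ((hardy_op ^^ k) g)"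
    unfolding NN_def by (rule hardy_bound0[OF hk _ p m]) (simp add: Hpow_zero g0)
  also have "\<dots> \<le> ennreal (1/2) * (ennreal ((1/2)^k) * NN p \<alpha> m g)"
    by (rule mult_left_mono[OF Suc]) simp
  also have "\<dots> = (ennreal (1/2) * ennreal ((1/2)^k)) * NN p \<alpha> m g"
    by (simp only: mult.assoc)
  also have "ennreal (1/2) * ennreal ((1/2)^k) = ennreal ((1/2)^Suc k)"
    by (subst ennreal_mult[symmetric]) auto
  finally show ?case .
qed

lemma NN_g_bound:
  assumes holf: "f holomorphic_on UNIV"
  shows "NN p \<alpha> m (\<lambda>z. f z - f 0) \<le> ennreal (2 powr p * 2) * NN p \<alpha> m f"
proof -
  have cf: "continuous_on UNIV f" by (rule holo_cont[OF p a m holf])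
  have "NN p \<alpha> m (\<lambda>z. f z - f 0)
      \<le> (\<integral>\<^sup>+ z. ennreal (2 powr p) * (ennreal (norm (f z) powr p * wt p \<alpha> m z) + ennreal (norm (f 0) powr p * wt p \<alpha> m z)) \<partial>lborel)"
    unfolding NN_def
  proof (rule nn_integral_mono)
    fix z :: complex
    have "norm (f z - f 0) powr p \<le> (norm (f z) + norm (f 0)) powr p"
      using p by (intro powr_mono2 norm_triangle_ineq4) auto
    also have "\<dots> \<le> 2 powr p * (norm (f z) powr p + norm (f 0) powr p)"
      by (rule powr_sum_bound) (use p in auto)
    finally have "norm (f z - f 0) powr p * wt p \<alpha> m z \<le> 2 powr p * (norm (f z) powr p + norm (f 0) powr p) * wt p \<alpha> m z"
      using wt_pos[of p \<alpha> m z] by (intro mult_right_mono) auto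
    also have "\<dots> = 2 powr p * (norm (f z) powr p * wt p \<alpha> m z + norm (f 0) powr p * wt p \<alpha> m z)"
      by (simp add: algebra_simps)
    finally have "ennreal (norm (f z - f 0) powr p * wt p \<alpha> m z)
        \<le> ennreal (2 powr p * (norm (f z) powr p * wt p \<alpha> m z + norm (f 0) powr p * wt p \<alpha> m z))"
      by (rule ennreal_leI)
    also have "\<dots> = ennreal (2 powr p) * (ennreal (norm (f z) powr p * wt p \<alpha> m z) + ennreal (norm (f 0) powr p * wt p \<alpha> m z))"
      using wt_pos[of p \<alpha> m z] by (simp add: ennreal_mult ennreal_plus less_imp_le)
    finally show "ennreal (norm (f z - f 0) powr p * wt p \<alpha> m z)
        \<le> ennreal (2 powr p) * (ennreal (norm (f z) powr p * wt p \<alpha> m z) + ennreal (norm (f 0) powr p * wt p \<alpha> m z))" .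
  qed
  also have "\<dots> = ennreal (2 powr p) * (NN p \<alpha> m f + NN p \<alpha> m (\<lambda>_. f 0))"
  proof -
    have m1: "(\<lambda>z. ennreal (norm (f z) powr p * wt p \<alpha> m z)) \<in> borel_measurable borel"
      using meas_NN[OF cf] by (simp only: measurable_lborel2)
    have m2: "(\<lambda>z. ennreal (norm (f 0) powr p * wt p \<alpha> m z)) \<in> borel_measurable borel"
      using meas_NN[OF continuous_on_const[of UNIV "f 0"]] by (simp only: measurable_lborel2)
    have "(\<integral>\<^sup>+ z. ennreal (2 powr p) * (ennreal (norm (f z) powr p * wt p \<alpha> m z) + ennreal (norm (f 0) powr p * wt p \<alpha> m z)) \<partial>lborel)
        = ennreal (2 powr p) * (\<integral>\<^sup>+ z. ennreal (norm (f z) powr p * wt p \<alpha> m z) + ennreal (norm (f 0) powr p * wt p \<alpha> m z) \<partial>lborel)"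
      by (rule nn_integral_cmult) (use borel_measurable_add[OF m1 m2] in \<open>simp only: measurable_lborel2\<close>)
    also have "(\<integral>\<^sup>+ z. ennreal (norm (f z) powr p * wt p \<alpha> m z) + ennreal (norm (f 0) powr p * wt p \<alpha> m z) \<partial>lborel)
        = NN p \<alpha> m f + NN p \<alpha> m (\<lambda>_. f 0)"
      unfolding NN_def by (rule nn_integral_add) (use m1 m2 in \<open>simp_all only: measurable_lborel2\<close>)
    finally show ?thesis .
  qed
  also have "NN p \<alpha> m (\<lambda>_. f 0) \<le> NN p \<alpha> m f"
    using f0_bound[OF p a m holf] by (simp add: NN_const[OF m])
  then have "ennreal (2 powr p) * (NN p \<alpha> m f + NN p \<alpha> m (\<lambda>_. f 0)) \<le> ennreal (2 powr p) * (NN p \<alpha> m f + NN p \<alpha> m f)"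
    by (intro mult_left_mono add_left_mono) auto
  also have "\<dots> = ennreal (2 powr p) * (2 * NN p \<alpha> m f)"
    by (simp only: mult_2)
  also have "\<dots> = ennreal (2 powr p * 2) * NN p \<alpha> m f"
    by (simp add: ennreal_mult mult.assoc)
  finally show ?thesis .
qed

end



context
  fixes p \<alpha> m :: real
  assumes p: "1 \<le> p" and a: "0 < \<alpha>" and m: "0 < m"
begin

lemma cesaro_eq:
  assumes holf: "f holomorphic_on UNIV" and n: "n \<ge> 1"
  shows "cesaro_mean hardy_op n f z - f 0 = (\<Sum>k\<in>{1..n}. (hardy_op ^^ k) (\<lambda>z. f z - f 0) z) / of_nat n"
proof -
  have sh: "(hardy_op ^^ k) f z = (hardy_op ^^ k) (\<lambda>z. f z - f 0) z + f 0" for k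
    using fun_cong[OF Hpow_shift[OF p a m holf, of k], of z] by simp
  have "(\<Sum>k\<in>{1..n}. (hardy_op ^^ k) f z) = (\<Sum>k\<in>{1..n}. (hardy_op ^^ k) (\<lambda>z. f z - f 0) z) + of_nat n * f 0"
    by (simp add: sh sum.distrib)
  moreover have "of_nat n \<noteq> (0::complex)" using n by simp
  ultimately show ?thesis
    by (simp add: cesaro_mean_def field_simps)
qed

lemma D_cont:
  assumes holf: "f holomorphic_on UNIV" and n: "n \<ge> 1"
  shows "continuous_on UNIV (\<lambda>z. cesaro_mean hardy_op n f z - f 0)"
proof -
  have "\<And>k. continuous_on UNIV ((hardy_op ^^ k) f)"
    by (rule holo_cont[OF p a m Hpow_holo[OF p a m holf]])
  then show ?thesis
    unfolding cesaro_mean_def using n by (intro continuous_intros) auto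
qed

lemma key_bound:
  assumes f: "f \<in> fock_space p \<alpha> m" and n: "n \<ge> 1"
  shows "NN p \<alpha> m (\<lambda>z. cesaro_mean hardy_op n f z - f 0) \<le> ennreal (2 powr p * 2 / real n) * NN p \<alpha> m f"
proof -
  have holf: "f holomorphic_on UNIV" by (rule space_holo[OF p a m f])
  define g where "g = (\<lambda>z. f z - f 0)"
  have holg: "g holomorphic_on UNIV" unfolding g_def using holf by (intro holomorphic_intros)
  have g0: "g 0 = 0" by (simp add: g_def)
  define A where "A = (\<lambda>k. (hardy_op ^^ k) g)"
  have holA: "A k holomorphic_on UNIV" for k unfolding A_def by (rule Hpow_holo[OF p a m holg])
  have mA: "(\<lambda>z. ennreal (norm (A k z) powr p * wt p \<alpha> m z)) \<in> borel_measurable lborel" for k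
    by (rule meas_NN[OF p a m holo_cont[OF p a m holA]])
  define X where "X = (\<lambda>k z. norm (A k z) powr p * wt p \<alpha> m z)"
  have X0: "X k z \<ge> 0" for k z using wt_pos[of p \<alpha> m z] by (simp add: X_def)
  have nn: "real n > 0" using n by simp
  have pt: "ennreal (norm (cesaro_mean hardy_op n f z - f 0) powr p * wt p \<alpha> m z)
        \<le> (\<Sum>k\<in>{1..n}. ennreal (1 / real n) * ennreal (X k z))" for z
  proof -
    have eq: "cesaro_mean hardy_op n f z - f 0 = (\<Sum>k\<in>{1..n}. A k z) / of_nat n"
      unfolding A_def g_def by (rule cesaro_eq[OF holf n])
    have "norm (cesaro_mean hardy_op n f z - f 0) = norm (\<Sum>k\<in>{1..n}. A k z) / real n"
      by (simp add: eq norm_divide)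
    also have "\<dots> \<le> (\<Sum>k\<in>{1..n}. norm (A k z)) / real n"
      by (rule divide_right_mono[OF norm_sum]) simp
    finally have "norm (cesaro_mean hardy_op n f z - f 0) powr p \<le> ((\<Sum>k\<in>{1..n}. norm (A k z)) / real n) powr p"
      using p by (intro powr_mono2) auto
    also have "\<dots> \<le> (\<Sum>k\<in>{1..n}. norm (A k z) powr p) / real n"
      using finite_jensen[of "{1..n}" "\<lambda>k. norm (A k z)" p] n p by simp
    finally have "norm (cesaro_mean hardy_op n f z - f 0) powr p * wt p \<alpha> m z
        \<le> (\<Sum>k\<in>{1..n}. norm (A k z) powr p) / real n * wt p \<alpha> m z"
      using wt_pos[of p \<alpha> m z] by (intro mult_right_mono) auto
    also have "\<dots> = (\<Sum>k\<in>{1..n}. 1 / real n * X k z)"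
      by (simp add: X_def sum_distrib_left sum_distrib_right sum_divide_distrib field_simps)
    finally have "ennreal (norm (cesaro_mean hardy_op n f z - f 0) powr p * wt p \<alpha> m z)
        \<le> ennreal (\<Sum>k\<in>{1..n}. 1 / real n * X k z)" by (rule ennreal_leI)
    also have "\<dots> = (\<Sum>k\<in>{1..n}. ennreal (1 / real n * X k z))"
      by (rule sum_ennreal[symmetric]) (use X0 in simp)
    also have "\<dots> = (\<Sum>k\<in>{1..n}. ennreal (1 / real n) * ennreal (X k z))"
      by (intro sum.cong refl ennreal_mult) (use X0 in auto)
    finally show ?thesis .
  qed
  have "NN p \<alpha> m (\<lambda>z. cesaro_mean hardy_op n f z - f 0)
      \<le> (\<integral>\<^sup>+ z. (\<Sum>k\<in>{1..n}. ennreal (1 / real n) * ennreal (X k z)) \<partial>lborel)"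
    unfolding NN_def by (rule nn_integral_mono) (rule pt)
  also have "\<dots> = (\<Sum>k\<in>{1..n}. (\<integral>\<^sup>+ z. ennreal (1 / real n) * ennreal (X k z) \<partial>lborel))"
    by (rule nn_integral_sum) (use mA in \<open>simp add: X_def\<close>)
  also have "\<dots> = (\<Sum>k\<in>{1..n}. ennreal (1 / real n) * NN p \<alpha> m (A k))"
  proof (intro sum.cong refl)
    fix k
    show "(\<integral>\<^sup>+ z. ennreal (1 / real n) * ennreal (X k z) \<partial>lborel) = ennreal (1 / real n) * NN p \<alpha> m (A k)"
      unfolding X_def NN_def by (rule nn_integral_cmult[OF mA])
  qed
  also have "\<dots> \<le> (\<Sum>k\<in>{1..n}. ennreal (1 / real n) * (ennreal ((1/2)^k) * NN p \<alpha> m g))"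
    by (intro sum_mono mult_left_mono) (auto simp: A_def intro: Hpow_bound0[OF p a m holg g0])
  also have "\<dots> = (\<Sum>k\<in>{1..n}. ennreal (1 / real n * (1/2)^k) * NN p \<alpha> m g)"
    by (intro sum.cong refl, subst ennreal_mult) (simp_all add: mult.assoc)
  also have "\<dots> = (\<Sum>k\<in>{1..n}. ennreal (1 / real n * (1/2)^k)) * NN p \<alpha> m g"
    by (rule sum_distrib_right[symmetric])
  also have "\<dots> = ennreal (\<Sum>k\<in>{1..n}. 1 / real n * (1/2)^k) * NN p \<alpha> m g"
    by (subst sum_ennreal) auto
  also have "\<dots> \<le> ennreal (1 / real n) * NN p \<alpha> m g"
  proof (rule mult_right_mono)
    have "(\<Sum>k\<in>{1..n}. 1 / real n * (1/2)^k) = 1 / real n * (\<Sum>k\<in>{1..n}. (1/2::real)^k)"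
      by (simp add: sum_distrib_left)
    also have "\<dots> \<le> 1 / real n * 1"
      by (rule mult_left_mono[OF geom_half]) simp
    finally show "ennreal (\<Sum>k\<in>{1..n}. 1 / real n * (1/2)^k) \<le> ennreal (1 / real n)"
      by (intro ennreal_leI) simp
  qed simp
  also have "\<dots> \<le> ennreal (1 / real n) * (ennreal (2 powr p * 2) * NN p \<alpha> m f)"
    by (rule mult_left_mono) (use NN_g_bound[OF p a m holf] in \<open>simp_all add: g_def\<close>)
  also have "\<dots> = ennreal (2 powr p * 2 / real n) * NN p \<alpha> m f"
    by (simp add: ennreal_mult[symmetric] mult.assoc[symmetric])
  finally show ?thesis .
qed

lemma D_norm:
  assumes f: "f \<in> fock_space p \<alpha> m" and n: "n \<ge> 1"
  shows "fock_norm p \<alpha> m (\<lambda>z. cesaro_mean hardy_op n f z - f 0) \<le> (2 powr p * 2 / real n) powr (1 / p) * fock_norm p \<alpha> m f"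
  by (rule norm_le[OF holo_cont[OF p a m space_holo[OF p a m f]] D_cont[OF space_holo[OF p a m f] n] p m
        key_bound[OF f n] space_fin[OF p a m f]]) simp

definition Bn :: "nat \<Rightarrow> real" where
  "Bn n = (2 powr p * 2 / real n) powr (1 / p)"

lemma D_opnorm:
  assumes n: "n \<ge> 1"
  shows "0 \<le> fock_opnorm p \<alpha> m (\<lambda>f z. cesaro_mean hardy_op n f z - f 0)
       \<and> fock_opnorm p \<alpha> m (\<lambda>f z. cesaro_mean hardy_op n f z - f 0) \<le> Bn n"
proof -
  let ?S = "{C. 0 \<le> C \<and> (\<forall>f\<in>fock_space p \<alpha> m. fock_norm p \<alpha> m (\<lambda>z. cesaro_mean hardy_op n f z - f 0) \<le> C * fock_norm p \<alpha> m f)}"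
  have B: "Bn n \<in> ?S" using D_norm[OF _ n] by (auto simp: Bn_def)
  have bdd: "bdd_below ?S" by (rule bdd_belowI[of _ 0]) auto
  have "Inf ?S \<le> Bn n" by (rule cInf_lower[OF B bdd])
  moreover have "0 \<le> Inf ?S" by (rule cInf_greatest) (use B in auto)
  ultimately show ?thesis unfolding fock_opnorm_def by simp
qed

lemma Bn_tendsto: "Bn \<longlonglongrightarrow> 0"
proof -
  define c where "c = (2 powr p * 2) powr (1 / p)"
  have ev: "\<forall>\<^sub>F n in sequentially. c * real n powr (- (1 / p)) = Bn n"
  proof (rule eventually_sequentiallyI[of 1])
    fix n :: nat assume "n \<ge> 1"
    then show "c * real n powr (- (1 / p)) = Bn n"
      by (simp add: Bn_def c_def powr_divide powr_minus_divide)
  qed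
  have "((\<lambda>n. c * real n powr (- (1 / p))) \<longlongrightarrow> c * 0) sequentially"
    by (intro tendsto_mult tendsto_const tendsto_neg_powr filterlim_real_sequentially) (use p in auto)
  then have "((\<lambda>n. c * real n powr (- (1 / p))) \<longlongrightarrow> 0) sequentially" by simp
  then show ?thesis using ev by (rule Lim_transform_eventually)
qed

lemma D_tendsto: "(\<lambda>n. fock_opnorm p \<alpha> m (\<lambda>f z. cesaro_mean hardy_op n f z - f 0)) \<longlonglongrightarrow> 0"
proof (rule tendsto_sandwich[OF _ _ tendsto_const Bn_tendsto])
  show "\<forall>\<^sub>F n in sequentially. 0 \<le> fock_opnorm p \<alpha> m (\<lambda>f z. cesaro_mean hardy_op n f z - f 0)"
    using D_opnorm by (auto intro: eventually_sequentiallyI[of 1])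
  show "\<forall>\<^sub>F n in sequentially. fock_opnorm p \<alpha> m (\<lambda>f z. cesaro_mean hardy_op n f z - f 0) \<le> Bn n"
    using D_opnorm by (auto intro: eventually_sequentiallyI[of 1])
qed

lemma L_bounded: "fock_bounded_op p \<alpha> m (\<lambda>f z. f 0)"
  unfolding fock_bounded_op_def
proof (intro conjI ballI allI exI)
  fix f assume f: "f \<in> fock_space p \<alpha> m"
  show "(\<lambda>z. f 0) \<in> fock_space p \<alpha> m" by (rule const_space[OF p a m])
  have "NN p \<alpha> m (\<lambda>z. f 0) \<le> NN p \<alpha> m f"
    using f0_bound[OF p a m space_holo[OF p a m f]] by (simp add: NN_const[OF m])
  then show "fock_norm p \<alpha> m (\<lambda>z. f 0) \<le> 1 * fock_norm p \<alpha> m f"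
    using norm_le1[OF p a m f] by simp
qed simp

end

theorem theorem4:
  fixes p \<alpha> m :: real
  assumes "1 \<le> p" and "0 < \<alpha>" and "0 < m"
  shows "fock_bounded_op p \<alpha> m hardy_op \<and> fock_opnorm p \<alpha> m hardy_op = 1 \<and>
         power_bounded p \<alpha> m hardy_op \<and> uniformly_mean_ergodic p \<alpha> m hardy_op"
proof (intro conjI)
  show "fock_bounded_op p \<alpha> m hardy_op" by (rule H_bounded[OF assms])
  show "fock_opnorm p \<alpha> m hardy_op = 1" by (rule opnorm_H[OF assms])
  show "power_bounded p \<alpha> m hardy_op" by (rule H_power_bounded[OF assms])
  show "uniformly_mean_ergodic p \<alpha> m hardy_op"
    unfolding uniformly_mean_ergodic_def
  proof (intro conjI exI)
    show "fock_bounded_op p \<alpha> m hardy_op" by (rule H_bounded[OF assms])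
    show "fock_bounded_op p \<alpha> m (\<lambda>f z. f 0)" by (rule L_bounded[OF assms])
    show "(\<lambda>n. fock_opnorm p \<alpha> m (\<lambda>f z. cesaro_mean hardy_op n f z - f 0)) \<longlonglongrightarrow> 0"
      by (rule D_tendsto[OF assms])
  qed
qed


end
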